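(* There exists a family of quantum circuits, one for each $n\ge 1$, of depth $O(1)$ (a constant independent of $n$) and size $O(n\log n)$, such that the $n$-th circuit implements exactly the quantum operation $\mathrm{OR}_n$.
   Context: Quantum circuits are built from elementary gates: arbitrary one-qubit gates, CNOT gates, and unbounded fan-out gates. An unbounded fan-out gate on $k+1$ qubits ($k\ge1$) maps $|y\rangle\bigotimes_{j=0}^{k-1}|x_j\rangle \mapsto |y\rangle\bigotimes_{j=0}^{k-1}|x_j\oplus y\rangle$ for $y,x_j\in\{0,1\}$ (for $k=1$ it is a CNOT). Circuits may use ancillary qubits initialized to $|0\rangle$. The size of a circuit is the total over its gates of the number of qubits each gate acts on; the depth is the number of layers, defined by: input qubits have depth 0, a gate has depth 1 plus the maximal depth of gates it depends on, and the circuit depth is the maximal gate depth. For $x=x_0\cdots x_{n-1}\in\{0,1\}^n$, $\mathrm{OR}_n(x)=1$ if $x\ne 0^n$ and $0$ otherwise; the quantum operation $\mathrm{OR}_n$ maps $\bigl(\bigotimes_{j=0}^{n-1}|x_j\rangle\bigr)|z\rangle\mapsto\bigl(\bigotimes_{j=0}^{n-1}|x_j\rangle\bigr)|z\oplus \mathrm{OR}_n(x)\rangle$ for $x_j,z\in\{0,1\}$. Logarithms are base 2. *)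

theory Defs
  imports Complex_Main "HOL-Library.Landau_Symbols"
begin

text \<open>Qubits are numbered 0,1,2,...; a computational basis string on m qubits is a
  bool list of length m (entry j is the value of qubit j). A (not necessarily normalised)
  state is a function from basis strings to complex amplitudes; only strings of the
  right length matter.\<close>

type_synonym qstate = "bool list \<Rightarrow> complex"

datatype gate =
    OneQ nat "bool \<Rightarrow> bool \<Rightarrow> complex"   (* arbitrary one-qubit gate: qubit, 2x2 matrix U (row, column) *)
  | CNOT nat nat                          (* control, target *)
  | Fanout nat "nat list"                 (* control y, targets x_0..x_{k-1} *)

definition unitary2 :: "(bool \<Rightarrow> bool \<Rightarrow> complex) \<Rightarrow> bool" where
  "unitary2 U \<longleftrightarrow> (\<forall>i j. (\<Sum>k\<in>UNIV. cnj (U k i) * U k j) = (if i = j then 1 else 0))"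

fun gate_qubits :: "gate \<Rightarrow> nat set" where
  "gate_qubits (OneQ q U) = {q}"
| "gate_qubits (CNOT c t) = {c, t}"
| "gate_qubits (Fanout c ts) = insert c (set ts)"

fun wf_gate :: "nat \<Rightarrow> gate \<Rightarrow> bool" where
  "wf_gate m (OneQ q U) \<longleftrightarrow> q < m \<and> unitary2 U"
| "wf_gate m (CNOT c t) \<longleftrightarrow> c < m \<and> t < m \<and> c \<noteq> t"
| "wf_gate m (Fanout c ts) \<longleftrightarrow> c < m \<and> (\<forall>t\<in>set ts. t < m) \<and> ts \<noteq> [] \<and> distinct ts \<and> c \<notin> set ts"

definition wf_circuit :: "nat \<Rightarrow> gate list \<Rightarrow> bool" where
  "wf_circuit m C \<longleftrightarrow> (\<forall>g\<in>set C. wf_gate m g)"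

text \<open>Fan-out: the basis state |y>|x_j> goes to |y>|x_j xor y>, i.e. a permutation of basis states
  (an involution), so the new amplitude of ys is the old amplitude of the flipped string.\<close>

definition fanout_flip :: "nat \<Rightarrow> nat list \<Rightarrow> bool list \<Rightarrow> bool list" where
  "fanout_flip c ts ys = foldl (\<lambda>zs t. zs[t := (zs ! t \<noteq> ys ! c)]) ys ts"

fun apply_gate :: "gate \<Rightarrow> qstate \<Rightarrow> qstate" where
  "apply_gate (OneQ q U) \<psi> = (\<lambda>ys. \<Sum>b\<in>UNIV. U (ys ! q) b * \<psi> (ys[q := b]))"
| "apply_gate (CNOT c t) \<psi> = (\<lambda>ys. \<psi> (fanout_flip c [t] ys))"
| "apply_gate (Fanout c ts) \<psi> = (\<lambda>ys. \<psi> (fanout_flip c ts ys))"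

fun run_circuit :: "gate list \<Rightarrow> qstate \<Rightarrow> qstate" where
  "run_circuit [] \<psi> = \<psi>"
| "run_circuit (g # gs) \<psi> = run_circuit gs (apply_gate g \<psi>)"

definition circuit_size :: "gate list \<Rightarrow> nat" where
  "circuit_size C = (\<Sum>g\<leftarrow>C. card (gate_qubits g))"

text \<open>Depth: input qubits have depth 0; a gate has depth 1 + the maximal depth of the gates it
  depends on (earlier gates sharing a qubit with it); the circuit depth is the maximal gate depth.
  We track, for each qubit, the depth of the last gate acting on it (0 if none).\<close>
fun gate_depths :: "(nat \<Rightarrow> nat) \<Rightarrow> gate list \<Rightarrow> nat list" where
  "gate_depths d [] = []"
| "gate_depths d (g # gs) =
     (let v = Suc (Max (d ` gate_qubits g))
      in v # gate_depths (\<lambda>q. if q \<in> gate_qubits g then v else d q) gs)"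

definition circuit_depth :: "gate list \<Rightarrow> nat" where
  "circuit_depth C = Max (insert 0 (set (gate_depths (\<lambda>_. 0) C)))"

text \<open>OR_n on n+1 qubits: input qubits 0..n-1, output qubit n.\<close>
definition OR_bits :: "bool list \<Rightarrow> bool" where
  "OR_bits xs \<longleftrightarrow> (\<exists>x\<in>set xs. x)"

definition OR_op :: "nat \<Rightarrow> qstate \<Rightarrow> qstate" where
  "OR_op n \<psi> = (\<lambda>ys. \<psi> (take n ys @ [ys ! n \<noteq> OR_bits (take n ys)] @ drop (Suc n) ys))"

text \<open>Tensor a state of n+1 qubits with a ancillas in |0>: qubits n+1..n+a are ancillas.\<close>
definition with_ancillas :: "nat \<Rightarrow> nat \<Rightarrow> qstate \<Rightarrow> qstate" where
  "with_ancillas k a \<psi> =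
     (\<lambda>ys. if length ys = k + a \<and> drop k ys = replicate a False then \<psi> (take k ys) else 0)"

definition implements_OR :: "nat \<Rightarrow> nat \<Rightarrow> gate list \<Rightarrow> bool" where
  "implements_OR n a C \<longleftrightarrow>
     (\<forall>\<psi>. run_circuit C (with_ancillas (Suc n) a \<psi>) = with_ancillas (Suc n) a (OR_op n \<psi>))"

end

theory Submission
  imports Defs
begin


lemma run_append: "run_circuit (A @ B) \<psi> = run_circuit B (run_circuit A \<psi>)"
  by (induction A arbitrary: \<psi>) auto

lemma foldl_upd_len: "length (foldl (\<lambda>zs t. zs[t := f (zs ! t)]) zs0 ts) = length zs0"
  by (induction ts arbitrary: zs0) auto

lemma foldl_upd_nth:
  "distinct ts \<Longrightarrow> k < length zs0 \<Longrightarrow>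
   foldl (\<lambda>zs t. zs[t := f (zs ! t)]) zs0 ts ! k = (if k \<in> set ts then f (zs0 ! k) else zs0 ! k)"
proof (induction ts arbitrary: zs0)
  case Nil
  then show ?case by simp
next
  case (Cons t ts)
  show ?case using Cons.prems Cons.IH[of "zs0[t := f (zs0 ! t)]"]
    by (cases "k = t") (auto simp: nth_list_update)
qed

lemma ff_len[simp]: "length (fanout_flip c ts ys) = length ys"
  unfolding fanout_flip_def by (rule foldl_upd_len)

lemma ff_nth: "distinct ts \<Longrightarrow> k < length ys \<Longrightarrow>
   fanout_flip c ts ys ! k = (if k \<in> set ts then (ys ! k \<noteq> ys ! c) else ys ! k)"
  unfolding fanout_flip_def by (rule foldl_upd_nth)


definition blists :: "nat \<Rightarrow> bool list set" where "blists p = {c. length c = p}"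

lemma finite_blists[simp]: "finite (blists p)"
proof -
  have "blists p = {xs. set xs \<subseteq> UNIV \<and> length xs = p}" by (auto simp: blists_def)
  thus ?thesis using finite_lists_length_eq[of "UNIV::bool set" p] by simp
qed

lemma blists_Suc: "blists (Suc p) = (\<lambda>(c,b). c @ [b]) ` (blists p \<times> UNIV)"
proof
  show "blists (Suc p) \<subseteq> (\<lambda>(c,b). c @ [b]) ` (blists p \<times> UNIV)"
  proof
    fix xs assume "xs \<in> blists (Suc p)"
    hence l: "length xs = Suc p" by (simp add: blists_def)
    hence "xs = butlast xs @ [last xs]" by (metis append_butlast_last_id list.size(3) nat.simps(3))
    moreover have "butlast xs \<in> blists p" using l by (simp add: blists_def)
    ultimately show "xs \<in> (\<lambda>(c,b). c @ [b]) ` (blists p \<times> UNIV)" by force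
  qed
qed (auto simp: blists_def)

lemma sum_blists_Suc: "sum f (blists (Suc p)) = (\<Sum>c\<in>blists p. \<Sum>b\<in>UNIV. f (c @ [b]))"
proof -
  have inj: "inj_on (\<lambda>(c,b). c @ [b]) (blists p \<times> (UNIV::bool set))"
    by (auto simp: inj_on_def)
  have "sum f (blists (Suc p)) = sum (f \<circ> (\<lambda>(c,b). c @ [b])) (blists p \<times> UNIV)"
    unfolding blists_Suc by (rule sum.reindex[OF inj])
  also have "\<dots> = (\<Sum>c\<in>blists p. \<Sum>b\<in>UNIV. f (c @ [b]))"
    by (simp add: sum.cartesian_product comp_def case_prod_unfold)
  finally show ?thesis .
qed

lemma sum_prod_blists:
  fixes f :: "nat \<Rightarrow> bool \<Rightarrow> 'a::comm_semiring_1"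
  shows "(\<Sum>c\<in>blists p. \<Prod>i<p. f i (c!i)) = (\<Prod>i<p. f i False + f i True)"
proof (induction p)
  case 0
  then show ?case by (simp add: blists_def)
next
  case (Suc p)
  have "(\<Sum>c\<in>blists (Suc p). \<Prod>i<Suc p. f i (c!i))
      = (\<Sum>c\<in>blists p. \<Sum>b\<in>UNIV. \<Prod>i<Suc p. f i ((c @ [b])!i))"
    by (rule sum_blists_Suc)
  also have "\<dots> = (\<Sum>c\<in>blists p. \<Sum>b\<in>UNIV. (\<Prod>i<p. f i (c!i)) * f p b)"
  proof (rule sum.cong[OF refl], rule sum.cong[OF refl])
    fix c b assume "c \<in> blists p"
    hence l: "length c = p" by (simp add: blists_def)
    have "(\<Prod>i<Suc p. f i ((c @ [b])!i)) = (\<Prod>i<p. f i ((c @ [b])!i)) * f p ((c @ [b])!p)"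
      by simp
    also have "(\<Prod>i<p. f i ((c @ [b])!i)) = (\<Prod>i<p. f i (c!i))"
      by (rule prod.cong) (auto simp: nth_append l)
    finally show "(\<Prod>i<Suc p. f i ((c @ [b])!i)) = (\<Prod>i<p. f i (c!i)) * f p b"
      using l by (simp add: nth_append)
  qed
  also have "\<dots> = (\<Sum>c\<in>blists p. (\<Prod>i<p. f i (c!i))) * (f p False + f p True)"
    by (simp add: UNIV_bool sum_distrib_right sum_distrib_left algebra_simps sum.distrib)
  also have "\<dots> = (\<Prod>i<Suc p. f i False + f i True)" using Suc by simp
  finally show ?case .
qed

lemma sum_single:
  fixes f :: "'b \<Rightarrow> 'a::comm_monoid_add"
  assumes "finite A" "v \<in> A" "\<And>c. c \<in> A \<Longrightarrow> c \<noteq> v \<Longrightarrow> f c = 0"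
  shows "sum f A = f v"
proof -
  have "sum f A = f v + sum f (A - {v})" using assms by (simp add: sum.remove)
  also have "sum f (A - {v}) = 0" using assms by (intro sum.neutral) auto
  finally show ?thesis by simp
qed

lemma sum_delta_blists:
  fixes f :: "bool list \<Rightarrow> 'a::comm_semiring_1"
  assumes "v \<in> blists p"
  shows "(\<Sum>c\<in>blists p. (if c = v then 1 else 0) * f c) = f v"
  by (rule trans[OF sum_single[where v=v]]) (use assms in auto)

fun setl :: "bool list \<Rightarrow> (nat \<Rightarrow> nat) \<Rightarrow> nat \<Rightarrow> bool list \<Rightarrow> bool list" where
  "setl ys g 0 c = ys"
| "setl ys g (Suc p) c = setl (ys[g p := c ! p]) g p c"

lemma setl_len[simp]: "length (setl ys g p c) = length ys"
  by (induction p arbitrary: ys) auto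

lemma setl_other: "k \<notin> g ` {..<p} \<Longrightarrow> setl ys g p c ! k = ys ! k"
proof (induction p arbitrary: ys)
  case 0 then show ?case by simp
next
  case (Suc p)
  hence "k \<notin> g ` {..<p}" "g p \<noteq> k" by auto
  thus ?case using Suc.IH by (simp add: nth_list_update_neq)
qed

lemma setl_at: "inj_on g {..<p} \<Longrightarrow> i < p \<Longrightarrow> g i < length ys \<Longrightarrow> setl ys g p c ! g i = c ! i"
proof (induction p arbitrary: ys)
  case 0 then show ?case by simp
next
  case (Suc p)
  show ?case
  proof (cases "i = p")
    case True
    have "g p \<notin> g ` {..<p}"
    proof
      assume "g p \<in> g ` {..<p}"
      then obtain x where "x < p" "g p = g x" by auto
      thus False using Suc.prems(1) unfolding inj_on_def by (metis lessThan_iff less_Suc_eq nat_neq_iff)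
    qed
    then show ?thesis using True Suc.prems by (simp add: setl_other)
  next
    case False
    have "inj_on g {..<p}" using Suc.prems(1) by (auto simp: inj_on_def)
    then show ?thesis using False Suc by simp
  qed
qed

lemma setl_cong: "(\<And>i. i < p \<Longrightarrow> c ! i = c' ! i) \<Longrightarrow> setl ys g p c = setl ys g p c'"
  by (induction p arbitrary: ys) auto

lemma setl_eqI:
  assumes "inj_on g {..<p}" "\<forall>i<p. g i < length ys" "length zs = length ys"
    "\<forall>i<p. zs ! g i = c ! i" "\<forall>k<length ys. k \<notin> g ` {..<p} \<longrightarrow> zs ! k = ys ! k"
  shows "setl ys g p c = zs"
proof (rule nth_equalityI)
  show "length (setl ys g p c) = length zs" using assms by simp
  fix k assume "k < length (setl ys g p c)"
  hence k: "k < length ys" by simp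
  show "setl ys g p c ! k = zs ! k"
  proof (cases "k \<in> g ` {..<p}")
    case True
    then obtain i where "i < p" "k = g i" by auto
    then show ?thesis using assms by (simp add: setl_at)
  next
    case False
    then show ?thesis using assms k by (simp add: setl_other)
  qed
qed

lemma setl_setl: "inj_on g {..<p} \<Longrightarrow> \<forall>i<p. g i < length ys \<Longrightarrow> setl (setl ys g p b) g p c = setl ys g p c"
  by (rule setl_eqI) (auto simp: setl_at setl_other)


section \<open>Gate semantics\<close>

definition hl :: "(nat \<Rightarrow> bool \<Rightarrow> bool \<Rightarrow> complex) \<Rightarrow> (nat \<Rightarrow> nat) \<Rightarrow> nat \<Rightarrow> gate list" where
  "hl U tg p = map (\<lambda>i. OneQ (tg i) (U i)) [0..<p]"

lemma inj_on_less_Suc: "inj_on g {..<Suc p} \<Longrightarrow> inj_on g {..<p}"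
  by (auto simp: inj_on_def)

lemma inj_on_notin: "inj_on g {..<Suc p} \<Longrightarrow> i < p \<Longrightarrow> g i \<noteq> g p"
  unfolding inj_on_def by (metis lessThan_iff less_Suc_eq nat_neq_iff)

lemma hl_sem:
  "inj_on tg {..<p} \<Longrightarrow> (\<forall>i<p. tg i < length ys) \<Longrightarrow>
   run_circuit (hl U tg p) \<psi> ys = (\<Sum>c\<in>blists p. (\<Prod>i<p. U i (ys ! tg i) (c ! i)) * \<psi> (setl ys tg p c))"
proof (induction p arbitrary: ys)
  case 0
  then show ?case by (simp add: hl_def blists_def)
next
  case (Suc p)
  have inj: "inj_on tg {..<p}" using Suc.prems(1) by (rule inj_on_less_Suc)
  have ne: "\<And>i. i < p \<Longrightarrow> tg i \<noteq> tg p" using Suc.prems(1) by (rule inj_on_notin)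
  have "run_circuit (hl U tg (Suc p)) \<psi> ys = apply_gate (OneQ (tg p) (U p)) (run_circuit (hl U tg p) \<psi>) ys"
    by (simp add: hl_def run_append)
  also have "\<dots> = (\<Sum>b\<in>UNIV. U p (ys ! tg p) b * run_circuit (hl U tg p) \<psi> (ys[tg p := b]))"
    by simp
  also have "\<dots> = (\<Sum>b\<in>UNIV. U p (ys ! tg p) b *
        (\<Sum>c\<in>blists p. (\<Prod>i<p. U i (ys ! tg i) (c ! i)) * \<psi> (setl (ys[tg p := b]) tg p c)))"
  proof (rule sum.cong[OF refl])
    fix b
    have nn: "\<And>i. i < p \<Longrightarrow> ys[tg p := b] ! tg i = ys ! tg i"
      by (metis ne nth_list_update_neq)
    have "run_circuit (hl U tg p) \<psi> (ys[tg p := b])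
        = (\<Sum>c\<in>blists p. (\<Prod>i<p. U i (ys[tg p := b] ! tg i) (c ! i)) * \<psi> (setl (ys[tg p := b]) tg p c))"
      using Suc.IH[OF inj] Suc.prems(2) by simp
    also have "\<dots> = (\<Sum>c\<in>blists p. (\<Prod>i<p. U i (ys ! tg i) (c ! i)) * \<psi> (setl (ys[tg p := b]) tg p c))"
      using nn by simp
    finally show "U p (ys ! tg p) b * run_circuit (hl U tg p) \<psi> (ys[tg p := b]) = U p (ys ! tg p) b *
        (\<Sum>c\<in>blists p. (\<Prod>i<p. U i (ys ! tg i) (c ! i)) * \<psi> (setl (ys[tg p := b]) tg p c))" by simp
  qed
  also have "\<dots> = (\<Sum>c\<in>blists p. \<Sum>b\<in>UNIV. (\<Prod>i<Suc p. U i (ys ! tg i) ((c @ [b]) ! i)) * \<psi> (setl ys tg (Suc p) (c @ [b])))"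
  proof -
    have "\<And>c b. c \<in> blists p \<Longrightarrow> (\<Prod>i<Suc p. U i (ys ! tg i) ((c @ [b]) ! i)) = (\<Prod>i<p. U i (ys ! tg i) (c ! i)) * U p (ys ! tg p) b"
    proof -
      fix c b assume "c \<in> blists p"
      hence l: "length c = p" by (simp add: blists_def)
      have "(\<Prod>i<p. U i (ys ! tg i) ((c @ [b]) ! i)) = (\<Prod>i<p. U i (ys ! tg i) (c ! i))"
        by (rule prod.cong) (auto simp: nth_append l)
      thus "(\<Prod>i<Suc p. U i (ys ! tg i) ((c @ [b]) ! i)) = (\<Prod>i<p. U i (ys ! tg i) (c ! i)) * U p (ys ! tg p) b"
        using l by (simp add: nth_append)
    qed
    moreover have "\<And>c b. c \<in> blists p \<Longrightarrow> setl ys tg (Suc p) (c @ [b]) = setl (ys[tg p := b]) tg p c"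
    proof -
      fix c b assume "c \<in> blists p"
      hence l: "length c = p" by (simp add: blists_def)
      have "setl ys tg (Suc p) (c @ [b]) = setl (ys[tg p := b]) tg p (c @ [b])" using l by (simp add: nth_append)
      also have "\<dots> = setl (ys[tg p := b]) tg p c" by (rule setl_cong) (simp add: nth_append l)
      finally show "setl ys tg (Suc p) (c @ [b]) = setl (ys[tg p := b]) tg p c" .
    qed
    ultimately show ?thesis
      by (simp add: sum_distrib_left sum.swap[where A=UNIV] algebra_simps cong: sum.cong)
  qed
  also have "\<dots> = (\<Sum>c\<in>blists (Suc p). (\<Prod>i<Suc p. U i (ys ! tg i) (c ! i)) * \<psi> (setl ys tg (Suc p) c))"
    by (rule sum_blists_Suc[symmetric])
  finally show ?case .
qed


definition Pm :: "real \<Rightarrow> bool \<Rightarrow> bool \<Rightarrow> complex" where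
  "Pm \<theta> i j = (if i = j then (if i then cis \<theta> else 1) else 0)"

lemma apply_Pm: "apply_gate (OneQ q (Pm \<theta>)) \<psi> = (\<lambda>ys. (if ys ! q then cis \<theta> else 1) * \<psi> ys)"
proof
  fix ys
  show "apply_gate (OneQ q (Pm \<theta>)) \<psi> ys = (if ys ! q then cis \<theta> else 1) * \<psi> ys"
  proof (cases "q < length ys")
    case True
    have "ys[q := ys ! q] = ys" by simp
    then show ?thesis by (cases "ys ! q") (auto simp: UNIV_bool Pm_def)
  next
    case False
    then show ?thesis by (cases "ys ! q") (auto simp: UNIV_bool Pm_def list_update_beyond)
  qed
qed

lemma apply_CNOT: "apply_gate (CNOT a b) \<psi> = (\<lambda>ys. \<psi> (ys[b := (ys ! b \<noteq> ys ! a)]))"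
  by (simp add: fanout_flip_def)

definition cpg :: "real \<Rightarrow> nat \<Rightarrow> nat \<Rightarrow> gate list" where
  "cpg \<theta> a b = [OneQ a (Pm (\<theta>/2)), OneQ b (Pm (\<theta>/2)), CNOT a b, OneQ b (Pm (-\<theta>/2)), CNOT a b]"

lemma run_cpg:
  assumes "a \<noteq> b" "a < length ys" "b < length ys"
  shows "run_circuit (cpg \<theta> a b) \<psi> ys = (if ys ! a \<and> ys ! b then cis \<theta> else 1) * \<psi> ys"
proof -
  have e: "run_circuit (cpg \<theta> a b) \<psi> ys =
     (if (ys[b := (ys ! b \<noteq> ys ! a)]) ! b then cis (-\<theta>/2) else 1) *
     ((if ys ! b then cis (\<theta>/2) else 1) * ((if ys ! a then cis (\<theta>/2) else 1) * \<psi> ys))"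
  proof -
    have ub: "ys[b := (ys ! b \<noteq> ys ! a)] ! a = ys ! a" using assms by simp
    have uu: "(ys[b := (ys ! b \<noteq> ys ! a)])[b := ((ys[b := (ys ! b \<noteq> ys ! a)]) ! b \<noteq> ys ! a)] = ys"
      using assms by (auto simp: list_update_same_conv)
    show ?thesis
      unfolding cpg_def run_circuit.simps apply_Pm apply_CNOT using ub uu by simp
  qed
  have c: "cis (\<theta>/2) * cis (\<theta>/2) = cis \<theta>" "cis (-\<theta>/2) * cis (\<theta>/2) = 1"
    by (simp_all add: cis_mult)
  show ?thesis unfolding e using assms c
    by (cases "ys ! a"; cases "ys ! b") (auto simp: algebra_simps)
qed

lemma run_concat_diag:
  assumes "\<And>i \<psi>. i \<in> set is \<Longrightarrow> run_circuit (F i) \<psi> ys = D i * \<psi> ys"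
  shows "run_circuit (concat (map F is)) \<psi> ys = (\<Prod>i\<leftarrow>is. D i) * \<psi> ys"
  using assms
proof (induction "is" arbitrary: \<psi>)
  case Nil then show ?case by simp
next
  case (Cons i "is")
  have "run_circuit (concat (map F (i # is))) \<psi> ys = run_circuit (concat (map F is)) (run_circuit (F i) \<psi>) ys"
    by (simp add: run_append)
  also have "\<dots> = (\<Prod>i\<leftarrow>is. D i) * run_circuit (F i) \<psi> ys" using Cons by simp
  also have "\<dots> = (\<Prod>i\<leftarrow>is. D i) * (D i * \<psi> ys)" using Cons by simp
  finally show ?case by (simp add: algebra_simps)
qed

fun cmapF :: "(nat \<Rightarrow> nat) \<Rightarrow> (nat \<Rightarrow> nat list) \<Rightarrow> nat list \<Rightarrow> bool list \<Rightarrow> bool list" where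
  "cmapF cc tt [] ys = ys"
| "cmapF cc tt (l # ls) ys = fanout_flip (cc l) (tt l) (cmapF cc tt ls ys)"

lemma cmapF_len[simp]: "length (cmapF cc tt ls ys) = length ys"
  by (induction ls) auto

lemma run_fanouts: "run_circuit (map (\<lambda>l. Fanout (cc l) (tt l)) ls) \<psi> = (\<lambda>ys. \<psi> (cmapF cc tt ls ys))"
  by (induction ls arbitrary: \<psi>) auto

lemma cmapF_nth:
  assumes "distinct ls" "\<forall>l\<in>set ls. distinct (tt l)"
    "\<forall>l\<in>set ls. \<forall>l'\<in>set ls. l \<noteq> l' \<longrightarrow> set (tt l) \<inter> set (tt l') = {}"
    "\<forall>l\<in>set ls. \<forall>l'\<in>set ls. cc l \<notin> set (tt l')"
    "\<forall>l\<in>set ls. \<forall>k\<in>set (tt l). own k = l"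
    "\<forall>l\<in>set ls. cc l < length ys"
    "k < length ys"
  shows "cmapF cc tt ls ys ! k = (if \<exists>l\<in>set ls. k \<in> set (tt l) then (ys ! k \<noteq> ys ! cc (own k)) else ys ! k)"
  using assms
proof (induction ls arbitrary: k)
  case Nil then show ?case by simp
next
  case (Cons l ls)
  let ?Y = "cmapF cc tt ls ys"
  have IH: "\<And>k. k < length ys \<Longrightarrow> ?Y ! k = (if \<exists>l\<in>set ls. k \<in> set (tt l) then (ys ! k \<noteq> ys ! cc (own k)) else ys ! k)"
  proof -
    fix k assume "k < length ys"
    show "?Y ! k = (if \<exists>l\<in>set ls. k \<in> set (tt l) then (ys ! k \<noteq> ys ! cc (own k)) else ys ! k)"
      by (rule Cons.IH) (use Cons.prems \<open>k < length ys\<close> in auto)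
  qed
  have Yc: "?Y ! cc l = ys ! cc l" using IH[of "cc l"] Cons.prems by auto
  show ?case
  proof (cases "k \<in> set (tt l)")
    case True
    have "\<not> (\<exists>l'\<in>set ls. k \<in> set (tt l'))"
    proof
      assume "\<exists>l'\<in>set ls. k \<in> set (tt l')"
      then obtain l' where "l' \<in> set ls" "k \<in> set (tt l')" by blast
      moreover have "own k = l" "own k = l'" using Cons.prems(5) True \<open>l' \<in> set ls\<close> \<open>k \<in> set (tt l')\<close> by auto
      ultimately have "l \<in> set ls" by simp
      thus False using Cons.prems(1) True \<open>k \<in> set (tt l')\<close> \<open>own k = l\<close> \<open>own k = l'\<close> by auto
    qed
    hence "?Y ! k = ys ! k" using IH Cons.prems(7) by auto
    moreover have "own k = l" using Cons.prems(5) True by auto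
    ultimately show ?thesis using True Yc Cons.prems(2,7) by (simp add: ff_nth)
  next
    case False
    have "cmapF cc tt (l # ls) ys ! k = ?Y ! k" using False Cons.prems(2,7) by (simp add: ff_nth)
    also have "\<dots> = (if \<exists>l\<in>set ls. k \<in> set (tt l) then (ys ! k \<noteq> ys ! cc (own k)) else ys ! k)"
      using IH Cons.prems(7) by blast
    finally show ?thesis using False by simp
  qed
qed


section \<open>The kickback gadget\<close>

definition Hm :: "bool \<Rightarrow> bool \<Rightarrow> complex" where
  "Hm i j = (if i \<and> j then -1 else 1) / complex_of_real (sqrt 2)"

definition tcp :: "nat \<Rightarrow> nat \<Rightarrow> nat \<Rightarrow> nat \<Rightarrow> nat" where "tcp off q i j = off + i*q + j"
definition ucp :: "nat \<Rightarrow> nat \<Rightarrow> nat \<Rightarrow> nat \<Rightarrow> nat \<Rightarrow> nat" where "ucp off p q i j = off + p*q + i*q + j"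
definition ccf :: "(nat \<Rightarrow> nat) \<Rightarrow> (nat \<Rightarrow> nat) \<Rightarrow> nat \<Rightarrow> nat \<Rightarrow> nat" where
  "ccf tg sr p l = (if l < p then tg l else sr (l - p))"
definition ttf :: "nat \<Rightarrow> nat \<Rightarrow> nat \<Rightarrow> nat \<Rightarrow> nat list" where
  "ttf off p q l = (if l < p then map (tcp off q l) [0..<q] else map (\<lambda>i. ucp off p q i (l - p)) [0..<p])"
definition ownf :: "nat \<Rightarrow> nat \<Rightarrow> nat \<Rightarrow> nat \<Rightarrow> nat" where
  "ownf off p q k = (if k < off + p*q then (k - off) div q else p + (k - off - p*q) mod q)"
definition fanl :: "(nat \<Rightarrow> nat) \<Rightarrow> (nat \<Rightarrow> nat) \<Rightarrow> nat \<Rightarrow> nat \<Rightarrow> nat \<Rightarrow> gate list" where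
  "fanl tg sr off p q = map (\<lambda>l. Fanout (ccf tg sr p l) (ttf off p q l)) [0..<p+q]"
definition cpsl :: "(nat \<Rightarrow> nat \<Rightarrow> real) \<Rightarrow> nat \<Rightarrow> nat \<Rightarrow> nat \<Rightarrow> gate list" where
  "cpsl \<theta> off p q = concat (map (\<lambda>i. concat (map (\<lambda>j. cpg (\<theta> i j) (tcp off q i j) (ucp off p q i j)) [0..<q])) [0..<p])"
definition KB :: "(nat \<Rightarrow> nat) \<Rightarrow> (nat \<Rightarrow> nat) \<Rightarrow> (nat \<Rightarrow> nat \<Rightarrow> real) \<Rightarrow> nat \<Rightarrow> nat \<Rightarrow> nat \<Rightarrow> gate list" where
  "KB tg sr \<theta> off p q = hl (\<lambda>_. Hm) tg p @ fanl tg sr off p q @ cpsl \<theta> off p q @ fanl tg sr off p q @ hl (\<lambda>_. Hm) tg p"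

definition kbok :: "(nat \<Rightarrow> nat) \<Rightarrow> (nat \<Rightarrow> nat) \<Rightarrow> nat \<Rightarrow> nat \<Rightarrow> nat \<Rightarrow> nat \<Rightarrow> bool" where
  "kbok tg sr off p q N \<longleftrightarrow> inj_on tg {..<p} \<and> inj_on sr {..<q} \<and> (\<forall>i<p. \<forall>j<q. tg i \<noteq> sr j)
     \<and> (\<forall>i<p. tg i < off) \<and> (\<forall>j<q. sr j < off) \<and> off + 2*p*q \<le> N"

lemma divmod_aux1: "j < q \<Longrightarrow> (l*q + j) div q = (l::nat)"
proof -
  assume j: "j < q"
  hence "q \<noteq> 0" by simp
  thus ?thesis using j by (simp add: add.commute[of "l*q"])
qed
lemma divmod_aux2: "j < q \<Longrightarrow> (l*q + j) mod q = (j::nat)"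
  by (simp add: add.commute[of "l*q"])
lemmas divmod_aux = divmod_aux1 divmod_aux2

lemma mem_ttf:
  assumes "l < p + q" "k \<in> set (ttf off p q l)"
  shows "off \<le> k \<and> k < off + 2*p*q \<and> ownf off p q k = l"
proof (cases "l < p")
  case True
  have "k \<in> set (map (tcp off q l) [0..<q])" using assms True by (simp add: ttf_def)
  then obtain j where j0: "j < q" "k = tcp off q l j" by auto
  hence j: "j < q" "k = off + l*q + j" by (auto simp: tcp_def)
  have "l*q + j < p*q"
  proof -
    have "l*q + j < (l+1)*q" using j by simp
    also have "\<dots> \<le> p*q" using True by (intro mult_right_mono) auto
    finally show ?thesis .
  qed
  then show ?thesis using j True by (auto simp: ownf_def divmod_aux)
next
  case False
  have "k \<in> set (map (\<lambda>i. ucp off p q i (l - p)) [0..<p])" using assms False by (simp add: ttf_def)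
  then obtain i where i0: "i < p" "k = ucp off p q i (l - p)" by auto
  hence i: "i < p" "k = off + p*q + i*q + (l - p)" by (auto simp: ucp_def)
  have lq: "l - p < q" using False assms(1) by simp
  have "i*q + (l - p) < p*q"
  proof -
    have "i*q + (l-p) < (i+1)*q" using lq by simp
    also have "\<dots> \<le> p*q" using i by (intro mult_right_mono) auto
    finally show ?thesis .
  qed
  moreover have "(k - off - p*q) mod q = l - p" using i lq by (simp add: divmod_aux)
  ultimately show ?thesis using i False by (auto simp: ownf_def)
qed

lemma ttf_cover:
  assumes "off \<le> k" "k < off + 2*p*q"
  shows "\<exists>l<p+q. k \<in> set (ttf off p q l)"
proof (cases "k < off + p*q")
  case True
  define l where "l = (k - off) div q"
  define j where "j = (k - off) mod q"
  have q: "q > 0" using assms by (cases q) auto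
  have "k - off < p*q" using True assms by simp
  hence l: "l < p" unfolding l_def by (simp add: less_mult_imp_div_less)
  have "k - off = l * q + j" unfolding l_def j_def by simp
  hence "k = tcp off q l j" using assms unfolding tcp_def by simp
  moreover have "j < q" using q by (simp add: j_def)
  ultimately show ?thesis using l by (intro exI[of _ l]) (auto simp: ttf_def)
next
  case False
  define i where "i = (k - off - p*q) div q"
  define j where "j = (k - off - p*q) mod q"
  have q: "q > 0" using assms by (cases q) auto
  have "k - off - p*q < p*q" using False assms by simp
  hence i: "i < p" unfolding i_def by (simp add: less_mult_imp_div_less)
  have "k - off - p*q = i * q + j" unfolding i_def j_def by simp
  hence "k = ucp off p q i j" using assms False unfolding ucp_def by simp
  moreover have "j < q" using q by (simp add: j_def)
  ultimately show ?thesis using i by (intro exI[of _ "p + j"]) (auto simp: ttf_def)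
qed

lemma ccf_own_lt:
  assumes "kbok tg sr off p q N" "off \<le> k" "k < off + 2*p*q"
  shows "ccf tg sr p (ownf off p q k) < off"
proof -
  obtain l where "l < p + q" "k \<in> set (ttf off p q l)" using ttf_cover[OF assms(2,3)] by blast
  hence "ownf off p q k = l" using mem_ttf by blast
  thus ?thesis using assms(1) \<open>l < p + q\<close> by (auto simp: ccf_def kbok_def)
qed

lemma FF_nth:
  assumes ok: "kbok tg sr off p q N" and len: "length ys = N" and k: "k < N"
  shows "cmapF (ccf tg sr p) (ttf off p q) [0..<p+q] ys ! k =
    (if off \<le> k \<and> k < off + 2*p*q then (ys ! k \<noteq> ys ! ccf tg sr p (ownf off p q k)) else ys ! k)"
proof -
  have q: "\<And>l. l < p + q \<Longrightarrow> p \<le> l \<Longrightarrow> q > 0" by auto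
  have dist: "\<forall>l\<in>set [0..<p+q]. distinct (ttf off p q l)"
  proof
    fix l assume "l \<in> set [0..<p+q]"
    hence l: "l < p + q" by simp
    show "distinct (ttf off p q l)"
    proof (cases "l < p")
      case True then show ?thesis by (simp add: ttf_def distinct_map inj_on_def tcp_def)
    next
      case False
      hence q0: "q > 0" using l by simp
      have "inj_on (\<lambda>i. ucp off p q i (l - p)) {0..<p}"
      proof (rule inj_onI)
        fix x y assume "ucp off p q x (l - p) = ucp off p q y (l - p)"
        hence "x * q = y * q" by (simp add: ucp_def)
        thus "x = y" using q0 by simp
      qed
      with False show ?thesis by (simp add: ttf_def distinct_map)
    qed
  qed
  have disj: "\<forall>l\<in>set [0..<p+q]. \<forall>l'\<in>set [0..<p+q]. l \<noteq> l' \<longrightarrow> set (ttf off p q l) \<inter> set (ttf off p q l') = {}"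
  proof (intro ballI impI)
    fix l l' assume "l \<in> set [0..<p+q]" "l' \<in> set [0..<p+q]" "l \<noteq> l'"
    show "set (ttf off p q l) \<inter> set (ttf off p q l') = {}"
    proof (rule ccontr)
      assume "set (ttf off p q l) \<inter> set (ttf off p q l') \<noteq> {}"
      then obtain k where "k \<in> set (ttf off p q l)" "k \<in> set (ttf off p q l')" by blast
      moreover have "l < p + q" "l' < p + q" using \<open>l \<in> set [0..<p+q]\<close> \<open>l' \<in> set [0..<p+q]\<close> by auto
      ultimately have "ownf off p q k = l" "ownf off p q k = l'"
        using mem_ttf by blast+
      thus False using \<open>l \<noteq> l'\<close> by simp
    qed
  qed
  have ccn: "\<forall>l\<in>set [0..<p+q]. \<forall>l'\<in>set [0..<p+q]. ccf tg sr p l \<notin> set (ttf off p q l')"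
  proof (intro ballI notI)
    fix l l' assume "l \<in> set [0..<p+q]" "l' \<in> set [0..<p+q]" "ccf tg sr p l \<in> set (ttf off p q l')"
    hence "off \<le> ccf tg sr p l" using mem_ttf by auto
    moreover have "ccf tg sr p l < off" using ok \<open>l \<in> set [0..<p+q]\<close> by (auto simp: ccf_def kbok_def)
    ultimately show False by simp
  qed
  have own: "\<forall>l\<in>set [0..<p+q]. \<forall>k\<in>set (ttf off p q l). ownf off p q k = l"
    using mem_ttf by auto
  have ccl: "\<forall>l\<in>set [0..<p+q]. ccf tg sr p l < length ys"
  proof
    fix l assume "l \<in> set [0..<p+q]"
    hence "ccf tg sr p l < off" using ok by (auto simp: ccf_def kbok_def)
    thus "ccf tg sr p l < length ys" using ok len by (auto simp: kbok_def)
  qed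
  have "cmapF (ccf tg sr p) (ttf off p q) [0..<p+q] ys ! k =
     (if \<exists>l\<in>set [0..<p+q]. k \<in> set (ttf off p q l) then (ys ! k \<noteq> ys ! ccf tg sr p (ownf off p q k)) else ys ! k)"
    by (rule cmapF_nth[OF _ dist disj ccn own ccl]) (use len k in auto)
  also have "(\<exists>l\<in>set [0..<p+q]. k \<in> set (ttf off p q l)) \<longleftrightarrow> off \<le> k \<and> k < off + 2*p*q"
  proof
    assume "\<exists>l\<in>set [0..<p+q]. k \<in> set (ttf off p q l)"
    then obtain l where "l < p + q" "k \<in> set (ttf off p q l)" by auto
    thus "off \<le> k \<and> k < off + 2*p*q" using mem_ttf by blast
  next
    assume "off \<le> k \<and> k < off + 2*p*q"
    then obtain l where "l < p + q" "k \<in> set (ttf off p q l)" using ttf_cover by blast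
    thus "\<exists>l\<in>set [0..<p+q]. k \<in> set (ttf off p q l)" by auto
  qed
  finally show ?thesis .
qed


definition FFm :: "(nat \<Rightarrow> nat) \<Rightarrow> (nat \<Rightarrow> nat) \<Rightarrow> nat \<Rightarrow> nat \<Rightarrow> nat \<Rightarrow> bool list \<Rightarrow> bool list" where
  "FFm tg sr off p q = cmapF (ccf tg sr p) (ttf off p q) [0..<p+q]"

lemma FFm_len[simp]: "length (FFm tg sr off p q ys) = length ys"
  by (simp add: FFm_def)

lemma run_fanl: "run_circuit (fanl tg sr off p q) \<psi> = (\<lambda>ys. \<psi> (FFm tg sr off p q ys))"
  unfolding fanl_def FFm_def by (rule run_fanouts)

lemma FFm_nth:
  assumes "kbok tg sr off p q N" "length ys = N" "k < N"
  shows "FFm tg sr off p q ys ! k =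
    (if off \<le> k \<and> k < off + 2*p*q then (ys ! k \<noteq> ys ! ccf tg sr p (ownf off p q k)) else ys ! k)"
  unfolding FFm_def by (rule FF_nth[OF assms])

lemma FFm_FFm:
  assumes ok: "kbok tg sr off p q N" and len: "length ys = N"
  shows "FFm tg sr off p q (FFm tg sr off p q ys) = ys"
proof (rule nth_equalityI)
  show "length (FFm tg sr off p q (FFm tg sr off p q ys)) = length ys" by simp
  fix k assume "k < length (FFm tg sr off p q (FFm tg sr off p q ys))"
  hence k: "k < N" using len by simp
  show "FFm tg sr off p q (FFm tg sr off p q ys) ! k = ys ! k"
  proof (cases "off \<le> k \<and> k < off + 2*p*q")
    case True
    let ?c = "ccf tg sr p (ownf off p q k)"
    have c: "?c < off" using ccf_own_lt[OF ok] True by blast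
    have cN: "?c < N" using c ok by (auto simp: kbok_def)
    have "FFm tg sr off p q ys ! ?c = ys ! ?c" using FFm_nth[OF ok len cN] c by simp
    then show ?thesis using FFm_nth[OF ok _ k, of "FFm tg sr off p q ys"] FFm_nth[OF ok len k] True len
      by auto
  next
    case False
    then show ?thesis using FFm_nth[OF ok _ k, of "FFm tg sr off p q ys"] FFm_nth[OF ok len k] len
      by auto
  qed
qed

lemma tcp_lt: "i < p \<Longrightarrow> j < q \<Longrightarrow> tcp off q i j < off + p*q"
proof -
  assume a: "i < p" "j < q"
  have "i*q + j < (i+1)*q" using a by simp
  also have "\<dots> \<le> p*q" using a by (intro mult_right_mono) auto
  finally show ?thesis by (simp add: tcp_def)
qed

lemma ucp_lt: "i < p \<Longrightarrow> j < q \<Longrightarrow> ucp off p q i j < off + 2*p*q"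
proof -
  assume a: "i < p" "j < q"
  have "i*q + j < (i+1)*q" using a by simp
  also have "\<dots> \<le> p*q" using a by (intro mult_right_mono) auto
  finally show ?thesis by (simp add: ucp_def)
qed

definition Dcp :: "(nat \<Rightarrow> nat \<Rightarrow> real) \<Rightarrow> nat \<Rightarrow> nat \<Rightarrow> nat \<Rightarrow> bool list \<Rightarrow> complex" where
  "Dcp \<theta> off p q Y = (\<Prod>i<p. \<Prod>j<q. (if Y ! tcp off q i j \<and> Y ! ucp off p q i j then cis (\<theta> i j) else 1))"

lemma prod_list_upt_lessThan: "(\<Prod>i\<leftarrow>[0..<p]. f i) = (\<Prod>i<p. f i)"
  by (simp add: prod.distinct_set_conv_list[symmetric] atLeast0LessThan)

lemma run_cpsl:
  assumes "off + 2*p*q \<le> length Y"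
  shows "run_circuit (cpsl \<theta> off p q) \<psi> Y = Dcp \<theta> off p q Y * \<psi> Y"
proof -
  have "run_circuit (cpsl \<theta> off p q) \<psi> Y =
     (\<Prod>i\<leftarrow>[0..<p]. \<Prod>j\<leftarrow>[0..<q]. (if Y ! tcp off q i j \<and> Y ! ucp off p q i j then cis (\<theta> i j) else 1)) * \<psi> Y"
    unfolding cpsl_def
  proof (rule run_concat_diag)
    fix i \<psi>' assume i: "i \<in> set [0..<p]"
    show "run_circuit (concat (map (\<lambda>j. cpg (\<theta> i j) (tcp off q i j) (ucp off p q i j)) [0..<q])) \<psi>' Y =
      (\<Prod>j\<leftarrow>[0..<q]. (if Y ! tcp off q i j \<and> Y ! ucp off p q i j then cis (\<theta> i j) else 1)) * \<psi>' Y"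
    proof (rule run_concat_diag)
      fix j \<psi>'' assume j: "j \<in> set [0..<q]"
      have a: "tcp off q i j < off + p*q" using tcp_lt i j by simp
      have b: "ucp off p q i j < off + 2*p*q" using ucp_lt i j by simp
      have c: "off + p*q \<le> ucp off p q i j" by (simp add: ucp_def)
      show "run_circuit (cpg (\<theta> i j) (tcp off q i j) (ucp off p q i j)) \<psi>'' Y =
        (if Y ! tcp off q i j \<and> Y ! ucp off p q i j then cis (\<theta> i j) else 1) * \<psi>'' Y"
        by (rule run_cpg) (use a b c assms in auto)
    qed
  qed
  thus ?thesis by (simp add: Dcp_def prod_list_upt_lessThan)
qed

definition Kk :: "(nat \<Rightarrow> nat) \<Rightarrow> (nat \<Rightarrow> nat) \<Rightarrow> (nat \<Rightarrow> nat \<Rightarrow> real) \<Rightarrow> nat \<Rightarrow> nat \<Rightarrow> nat \<Rightarrow> bool list \<Rightarrow> bool list \<Rightarrow> complex" where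
  "Kk tg sr \<theta> off p q ys c = (\<Sum>b\<in>blists p. (\<Prod>i<p. Hm (ys ! tg i) (b ! i)) *
      Dcp \<theta> off p q (FFm tg sr off p q (setl ys tg p b)) * (\<Prod>i<p. Hm (b ! i) (c ! i)))"

lemma run_KB_gen:
  assumes ok: "kbok tg sr off p q N" and len: "length ys = N"
  shows "run_circuit (KB tg sr \<theta> off p q) \<psi> ys = (\<Sum>c\<in>blists p. Kk tg sr \<theta> off p q ys c * \<psi> (setl ys tg p c))"
proof -
  have inj: "inj_on tg {..<p}" and tgl: "\<And>ys'. length ys' = N \<Longrightarrow> \<forall>i<p. tg i < length ys'"
    using ok by (auto simp: kbok_def)
  let ?F = "FFm tg sr off p q"
  let ?h = "hl (\<lambda>_. Hm) tg p"
  define \<chi>1 where "\<chi>1 = run_circuit ?h \<psi>"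
  have e1: "run_circuit (KB tg sr \<theta> off p q) \<psi> =
      run_circuit ?h (run_circuit (fanl tg sr off p q) (run_circuit (cpsl \<theta> off p q)
        (run_circuit (fanl tg sr off p q) \<chi>1)))"
    by (simp add: KB_def run_append \<chi>1_def)
  have e4: "\<And>Y. length Y = N \<Longrightarrow> run_circuit (fanl tg sr off p q) (run_circuit (cpsl \<theta> off p q)
        (run_circuit (fanl tg sr off p q) \<chi>1)) Y = Dcp \<theta> off p q (?F Y) * \<chi>1 Y"
  proof -
    fix Y :: "bool list" assume lY: "length Y = N"
    have "off + 2*p*q \<le> length (?F Y)" using ok lY by (simp add: kbok_def)
    thus "run_circuit (fanl tg sr off p q) (run_circuit (cpsl \<theta> off p q)
        (run_circuit (fanl tg sr off p q) \<chi>1)) Y = Dcp \<theta> off p q (?F Y) * \<chi>1 Y"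
      by (simp add: run_fanl run_cpsl FFm_FFm[OF ok lY])
  qed
  have e5: "\<And>b. b \<in> blists p \<Longrightarrow> \<chi>1 (setl ys tg p b) =
      (\<Sum>c\<in>blists p. (\<Prod>i<p. Hm (b ! i) (c ! i)) * \<psi> (setl ys tg p c))"
  proof -
    fix b assume "b \<in> blists p"
    have l2: "length (setl ys tg p b) = N" using len by simp
    have "\<chi>1 (setl ys tg p b) = (\<Sum>c\<in>blists p. (\<Prod>i<p. Hm (setl ys tg p b ! tg i) (c ! i)) *
        \<psi> (setl (setl ys tg p b) tg p c))"
      unfolding \<chi>1_def by (rule hl_sem[OF inj tgl[OF l2]])
    also have "\<dots> = (\<Sum>c\<in>blists p. (\<Prod>i<p. Hm (b ! i) (c ! i)) * \<psi> (setl ys tg p c))"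
      using inj tgl[OF len] by (simp add: setl_at setl_setl)
    finally show "\<chi>1 (setl ys tg p b) = (\<Sum>c\<in>blists p. (\<Prod>i<p. Hm (b ! i) (c ! i)) * \<psi> (setl ys tg p c))" .
  qed
  have "run_circuit (KB tg sr \<theta> off p q) \<psi> ys =
      (\<Sum>b\<in>blists p. (\<Prod>i<p. Hm (ys ! tg i) (b ! i)) * (Dcp \<theta> off p q (?F (setl ys tg p b)) *
        (\<Sum>c\<in>blists p. (\<Prod>i<p. Hm (b ! i) (c ! i)) * \<psi> (setl ys tg p c))))"
    unfolding e1 hl_sem[OF inj tgl[OF len]]
    by (intro sum.cong refl arg_cong2[where f="(*)"]) (simp_all add: e4 len e5)
  also have "\<dots> = (\<Sum>c\<in>blists p. Kk tg sr \<theta> off p q ys c * \<psi> (setl ys tg p c))"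
    unfolding Kk_def sum_distrib_left sum_distrib_right
    by (subst sum.swap) (simp add: algebra_simps)
  finally show ?thesis .
qed


definition sg :: "bool \<Rightarrow> complex" where "sg b = (if b then -1 else 1)"

definition Mk :: "real \<Rightarrow> bool \<Rightarrow> bool \<Rightarrow> complex" where
  "Mk \<phi> y c = (1 + sg y * sg c * cis \<phi>) / 2"

lemma Hm_sq: "complex_of_real (sqrt 2) * complex_of_real (sqrt 2) = 2"
  by (simp flip: of_real_mult)

lemma Mk_eq: "Hm y False * 1 * Hm False c + Hm y True * cis \<phi> * Hm True c = Mk \<phi> y c"
proof -
  have s: "complex_of_real (sqrt 2) \<noteq> 0" by simp
  show ?thesis unfolding Hm_def Mk_def sg_def
    by (cases y; cases c) (simp_all add: field_simps Hm_sq)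
qed

lemma prod_cis: "finite A \<Longrightarrow> (\<Prod>j\<in>A. cis (f j)) = cis (\<Sum>j\<in>A. f j)"
  by (induction A rule: finite_induct) (auto simp: cis_mult)

lemma prod_if_cis: "(\<Prod>j<(q::nat). (if B \<and> u j then cis (t j) else 1)) = (if B then cis (\<Sum>j<q. (if u j then t j else 0)) else 1)"
proof (cases B)
  case True
  have "(\<Prod>j<q. (if u j then cis (t j) else 1)) = (\<Prod>j<q. cis (if u j then t j else 0))"
    by (rule prod.cong) auto
  also have "\<dots> = cis (\<Sum>j<q. (if u j then t j else 0))" by (rule prod_cis) simp
  finally show ?thesis using True by simp
qed simp

definition phi :: "(nat \<Rightarrow> nat) \<Rightarrow> (nat \<Rightarrow> nat \<Rightarrow> real) \<Rightarrow> nat \<Rightarrow> bool list \<Rightarrow> nat \<Rightarrow> real" where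
  "phi sr \<theta> q ys i = (\<Sum>j<q. (if ys ! sr j then \<theta> i j else 0))"

lemma ownf_tcp: "i < p \<Longrightarrow> j < q \<Longrightarrow> ownf off p q (tcp off q i j) = i"
  using mem_ttf[of i p q "tcp off q i j" off] by (auto simp: ttf_def)

lemma ownf_ucp: "i < p \<Longrightarrow> j < q \<Longrightarrow> ownf off p q (ucp off p q i j) = p + j"
  using mem_ttf[of "p + j" p q "ucp off p q i j" off] by (auto simp: ttf_def)

lemma Kk_zero:
  assumes ok: "kbok tg sr off p q N" and len: "length ys = N"
    and z: "\<forall>k. off \<le> k \<and> k < off + 2*p*q \<longrightarrow> \<not> ys ! k"
  shows "Kk tg sr \<theta> off p q ys c = (\<Prod>i<p. Mk (phi sr \<theta> q ys i) (ys ! tg i) (c ! i))"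
proof -
  have inj: "inj_on tg {..<p}" and tgl: "\<forall>i<p. tg i < length ys" and tgo: "\<forall>i<p. tg i < off"
    and srl: "\<forall>j<q. sr j < length ys"
    using ok len by (auto simp: kbok_def)
  have srtg: "\<forall>j<q. sr j \<notin> tg ` {..<p}" using ok by (force simp: kbok_def)
  have D: "Dcp \<theta> off p q (FFm tg sr off p q (setl ys tg p b)) =
      (\<Prod>i<p. (if b ! i then cis (phi sr \<theta> q ys i) else 1))" for b
  proof -
    let ?Y = "setl ys tg p b"
    have lY: "length ?Y = N" using len by simp
    have Yz: "\<And>k. off \<le> k \<Longrightarrow> k < off + 2*p*q \<Longrightarrow> \<not> ?Y ! k"
    proof -
      fix k assume "off \<le> k" "k < off + 2*p*q"
      moreover have "k \<notin> tg ` {..<p}" using tgo \<open>off \<le> k\<close> by auto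
      ultimately show "\<not> ?Y ! k" using z by (simp add: setl_other)
    qed
    have t: "FFm tg sr off p q ?Y ! tcp off q i j = b ! i" if "i < p" "j < q" for i j
    proof -
      have a: "off \<le> tcp off q i j" "tcp off q i j < off + 2*p*q" "tcp off q i j < N"
        using tcp_lt[OF that, of off] ok by (auto simp: tcp_def kbok_def)
      show ?thesis using FFm_nth[OF ok lY a(3)] a Yz[OF a(1,2)] that ownf_tcp[OF that]
          setl_at[OF inj that(1)] tgl by (simp add: ccf_def)
    qed
    have u: "FFm tg sr off p q ?Y ! ucp off p q i j = ys ! sr j" if "i < p" "j < q" for i j
    proof -
      have a: "off \<le> ucp off p q i j" "ucp off p q i j < off + 2*p*q" "ucp off p q i j < N"
        using ucp_lt[OF that, of off] ok by (auto simp: ucp_def kbok_def)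
      show ?thesis using FFm_nth[OF ok lY a(3)] a Yz[OF a(1,2)] that ownf_ucp[OF that]
          setl_other srtg by (simp add: ccf_def)
    qed
    have "Dcp \<theta> off p q (FFm tg sr off p q ?Y) =
        (\<Prod>i<p. \<Prod>j<q. (if b ! i \<and> ys ! sr j then cis (\<theta> i j) else 1))"
      unfolding Dcp_def by (intro prod.cong refl) (simp add: t u)
    also have "\<dots> = (\<Prod>i<p. (if b ! i then cis (phi sr \<theta> q ys i) else 1))"
      by (intro prod.cong refl) (simp add: prod_if_cis phi_def)
    finally show ?thesis .
  qed
  have "Kk tg sr \<theta> off p q ys c = (\<Sum>b\<in>blists p. \<Prod>i<p. Hm (ys ! tg i) (b ! i) *
      (if b ! i then cis (phi sr \<theta> q ys i) else 1) * Hm (b ! i) (c ! i))"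
    unfolding Kk_def D by (simp add: prod.distrib)
  also have "\<dots> = (\<Prod>i<p. Hm (ys ! tg i) False * 1 * Hm False (c ! i) +
      Hm (ys ! tg i) True * cis (phi sr \<theta> q ys i) * Hm True (c ! i))"
    by (subst sum_prod_blists) simp
  also have "\<dots> = (\<Prod>i<p. Mk (phi sr \<theta> q ys i) (ys ! tg i) (c ! i))"
    by (simp only: Mk_eq)
  finally show ?thesis .
qed




lemma sum_pairs: "(\<Sum>t<2*M. g t) = (\<Sum>t<M. g (2*t) + g (2*t+1))"
  for g :: "nat \<Rightarrow> 'a::comm_monoid_add"
proof (induction M)
  case 0 then show ?case by simp
next
  case (Suc M)
  have "2 * Suc M = Suc (Suc (2*M))" by simp
  then show ?case using Suc by (simp add: add.assoc)
qed

lemma sum_prod_bits: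
  fixes f :: "nat \<Rightarrow> bool \<Rightarrow> 'a::comm_semiring_1"
  shows "(\<Sum>t<(2::nat)^m. \<Prod>k<m. f k (bit t k)) = (\<Prod>k<m. f k False + f k True)"
proof (induction m arbitrary: f)
  case 0 then show ?case by (simp add: card_lessThan)
next
  case (Suc m)
  have "(\<Sum>t<(2::nat)^Suc m. \<Prod>k<Suc m. f k (bit t k)) = (\<Sum>t<(2::nat)*2^m. f 0 (odd t) * (\<Prod>k<m. f (Suc k) (bit (t div 2) k)))"
  proof (rule sum.cong)
    show "{..<(2::nat)^Suc m} = {..<(2::nat)*2^m}" by simp
  next
    fix t :: nat
    show "(\<Prod>k<Suc m. f k (bit t k)) = f 0 (odd t) * (\<Prod>k<m. f (Suc k) (bit (t div 2) k))"
      by (simp only: prod.lessThan_Suc_shift bit_0 bit_Suc)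
  qed
  also have "\<dots> = (\<Sum>t<(2::nat)^m. (f 0 False + f 0 True) * (\<Prod>k<m. f (Suc k) (bit t k)))"
    unfolding sum_pairs by (simp add: algebra_simps)
  also have "\<dots> = (f 0 False + f 0 True) * (\<Prod>k<m. f (Suc k) False + f (Suc k) True)"
    by (simp add: sum_distrib_left[symmetric] Suc.IH[of "\<lambda>k. f (Suc k)"])
  also have "\<dots> = (\<Prod>k<Suc m. f k False + f k True)"
    by (simp only: prod.lessThan_Suc_shift)
  finally show ?case .
qed

lemma two_adic: "0 < (w::nat) \<Longrightarrow> \<exists>v d. w = 2^v * d \<and> odd d"
proof (induction w rule: less_induct)
  case (less w)
  show ?case
  proof (cases "odd w")
    case True then show ?thesis by (intro exI[of _ 0] exI[of _ w]) simp
  next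
    case False
    then obtain u where u: "w = 2 * u" by (auto elim: evenE)
    hence "0 < u" "u < w" using less.prems by auto
    then obtain v d where "u = 2^v * d" "odd d" using less.IH by blast
    thus ?thesis using u by (intro exI[of _ "Suc v"] exI[of _ d]) simp
  qed
qed

lemma cis_pi_nat: "cis (pi * real c) = (-1) ^ c"
proof -
  have "cis (pi * real c) = cis (real c * pi)" by (simp add: mult.commute)
  also have "\<dots> = (cis pi) ^ c" by (rule DeMoivre[symmetric])
  finally show ?thesis by simp
qed

lemma Mk_zero: "Mk 0 y d = (if y = d then 1 else 0)"
  by (cases y; cases d) (simp_all add: Mk_def sg_def)

lemma Mk_pi_nat: "Mk (pi * real c) y d = (if (y = d) = even c then 1 else 0)"
  by (cases y; cases d; cases "even c") (simp_all add: Mk_def sg_def cis_pi_nat)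

lemma Mk_pi: "Mk pi y d = (if y = d then 0 else 1)"
  using Mk_pi_nat[of 1 y d] by simp

lemma Mk_inv: "Mk (-\<phi>) y False * Mk \<phi> False False + Mk (-\<phi>) y True * Mk \<phi> True False = (if y then 0 else 1)"
proof -
  have c: "cis (-\<phi>) * cis \<phi> = 1" by (simp add: cis_mult)
  have e1: "(1 + a) / 2 * ((1 + b) / 2) + (1 - a) / 2 * ((1 - b) / 2) = (1::complex)" if "a * b = 1" for a b
  proof -
    have "(1 + a) * (1 + b) + (1 - a) * (1 - b) = 2 + 2 * (a * b)" by (simp add: algebra_simps)
    thus ?thesis using that by (simp add: field_simps)
  qed
  have e2: "(1 - a) / 2 * ((1 + b) / 2) + (1 + a) / 2 * ((1 - b) / 2) = (0::complex)" if "a * b = 1" for a b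
  proof -
    have "(1 - a) * (1 + b) + (1 + a) * (1 - b) = 2 - 2 * (a * b)" by (simp add: algebra_simps)
    thus ?thesis using that by (simp add: field_simps)
  qed
  show ?thesis
  proof (cases y)
    case True
    then show ?thesis using e2[OF c] by (simp add: Mk_def sg_def)
  next
    case False
    then show ?thesis using e1[OF c] by (simp add: Mk_def sg_def)
  qed
qed


definition cntb :: "nat \<Rightarrow> (nat \<Rightarrow> bool) \<Rightarrow> nat \<Rightarrow> nat" where
  "cntb m s t = (\<Sum>k<m. if bit t k \<and> s k then 1 else 0)"

lemma neg1_cntb: "((-1::real) ^ cntb m s t) = (\<Prod>k<m. if bit t k \<and> s k then -1 else 1)"
  unfolding cntb_def power_sum by (intro prod.cong refl) auto

lemma count_odd_all:
  "(\<Sum>t<(2::nat)^m. if odd (cntb m s t) then (1::real) else 0) = (if \<exists>k<m. s k then 2^m / 2 else 0)"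
proof -
  have S: "(\<Sum>t<(2::nat)^m. (-1::real) ^ cntb m s t) = (if \<exists>k<m. s k then 0 else 2^m)"
  proof -
    have "(\<Sum>t<(2::nat)^m. (-1::real) ^ cntb m s t) = (\<Sum>t<(2::nat)^m. \<Prod>k<m. (\<lambda>k b. if b \<and> s k then -1 else (1::real)) k (bit t k))"
      by (simp add: neg1_cntb)
    also have "\<dots> = (\<Prod>k<m. (1 + (if s k then -1 else 1)))" by (subst sum_prod_bits) simp
    also have "\<dots> = (if \<exists>k<m. s k then 0 else 2^m)"
    proof (cases "\<exists>k<m. s k")
      case True
      then obtain k where "k < m" "s k" by blast
      have "(\<Prod>k<m. (1 + (if s k then -1 else 1::real))) = 0"
        by (rule prod_zero) (use \<open>k < m\<close> \<open>s k\<close> in auto)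
      then show ?thesis using True by simp
    next
      case False
      then show ?thesis by simp
    qed
    finally show ?thesis .
  qed
  have "(\<Sum>t<(2::nat)^m. if odd (cntb m s t) then (1::real) else 0) = (\<Sum>t<(2::nat)^m. (1 - (-1) ^ cntb m s t) / 2)"
    by (intro sum.cong refl) auto
  also have "\<dots> = (2^m - (\<Sum>t<(2::nat)^m. (-1::real) ^ cntb m s t)) / 2"
    by (simp add: sum_divide_distrib[symmetric] sum_subtractf)
  finally show ?thesis using S by (cases "\<exists>k<m. s k") auto
qed

lemma count_odd:
  assumes "(2::nat)^m = Suc P"
  shows "(\<Sum>t<P. if odd (cntb m s (Suc t)) then (1::real) else 0) = (if \<exists>k<m. s k then 2^m / 2 else 0)"
proof -
  have c0: "cntb m s 0 = 0" by (simp add: cntb_def)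
  have "(\<Sum>t<(2::nat)^m. if odd (cntb m s t) then (1::real) else 0) = (\<Sum>t<P. if odd (cntb m s (Suc t)) then (1::real) else 0)"
    unfolding assms by (simp only: sum.lessThan_Suc_shift c0) simp
  thus ?thesis using count_odd_all by simp
qed


section \<open>The construction\<close>

definition mm :: "nat \<Rightarrow> nat" where "mm n = (LEAST m. n < 2^m)"
definition PP :: "nat \<Rightarrow> nat" where "PP n = 2^(mm n) - 1"
definition rr :: "nat \<Rightarrow> nat \<Rightarrow> nat" where "rr n k = Suc n + k"
definition apos :: "nat \<Rightarrow> nat \<Rightarrow> nat" where "apos n t = Suc n + mm n + t"
definition off1 :: "nat \<Rightarrow> nat" where "off1 n = Suc n + mm n + PP n"
definition off2 :: "nat \<Rightarrow> nat" where "off2 n = off1 n + 2 * mm n * n"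
definition off3 :: "nat \<Rightarrow> nat" where "off3 n = off2 n + 2 * PP n * mm n"
definition NN :: "nat \<Rightarrow> nat" where "NN n = off3 n + 2 * 1 * PP n"
definition AA :: "nat \<Rightarrow> nat" where "AA n = NN n - Suc n"

definition th1 :: "nat \<Rightarrow> nat \<Rightarrow> real" where "th1 k j = pi / 2^k"
definition th1i :: "nat \<Rightarrow> nat \<Rightarrow> real" where "th1i k j = - (pi / 2^k)"
definition tha :: "nat \<Rightarrow> nat \<Rightarrow> real" where "tha t k = (if bit (Suc t) k then pi else 0)"
definition thz :: "nat \<Rightarrow> nat \<Rightarrow> nat \<Rightarrow> real" where "thz n i t = pi / 2^(mm n - 1)"

definition KB1 :: "nat \<Rightarrow> gate list" where "KB1 n = KB (rr n) (\<lambda>j. j) th1 (off1 n) (mm n) n"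
definition KB1i :: "nat \<Rightarrow> gate list" where "KB1i n = KB (rr n) (\<lambda>j. j) th1i (off1 n) (mm n) n"
definition KBa :: "nat \<Rightarrow> gate list" where "KBa n = KB (apos n) (rr n) tha (off2 n) (PP n) (mm n)"
definition KBz :: "nat \<Rightarrow> gate list" where "KBz n = KB (\<lambda>_. n) (apos n) (thz n) (off3 n) 1 (PP n)"
definition Cn :: "nat \<Rightarrow> gate list" where "Cn n = KB1 n @ KBa n @ KBz n @ KBa n @ KB1i n"

lemma mm_gt: "n < 2 ^ mm n"
proof -
  have "n < 2^n" by (rule less_exp)
  thus ?thesis unfolding mm_def by (rule LeastI)
qed

lemma mm_pos: "1 \<le> n \<Longrightarrow> 1 \<le> mm n"
proof (rule ccontr)
  assume "1 \<le> n" "\<not> 1 \<le> mm n"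
  hence "mm n = 0" by simp
  thus False using mm_gt[of n] \<open>1 \<le> n\<close> by simp
qed

lemma mm_le: "1 \<le> n \<Longrightarrow> 2 ^ (mm n - 1) \<le> n"
proof -
  assume n: "1 \<le> n"
  have "mm n - 1 < mm n" using mm_pos[OF n] by simp
  hence "\<not> n < 2 ^ (mm n - 1)" unfolding mm_def by (rule not_less_Least)
  thus ?thesis by simp
qed

lemma PP_Suc: "2 ^ mm n = Suc (PP n)"
  unfolding PP_def by simp

lemma PP_pos: "1 \<le> n \<Longrightarrow> 1 \<le> PP n"
proof -
  assume "1 \<le> n"
  hence "2 ^ 1 \<le> (2::nat) ^ mm n" using mm_pos by (intro power_increasing) auto
  thus ?thesis unfolding PP_def by simp
qed

lemma kbok1: "kbok (rr n) (\<lambda>j. j) (off1 n) (mm n) n (NN n)"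
  by (auto simp: kbok_def inj_on_def rr_def off1_def off2_def off3_def NN_def)

lemma kboka: "kbok (apos n) (rr n) (off2 n) (PP n) (mm n) (NN n)"
  by (auto simp: kbok_def inj_on_def rr_def apos_def off1_def off2_def off3_def NN_def)

lemma kbokz: "kbok (\<lambda>_. n) (apos n) (off3 n) 1 (PP n) (NN n)"
  by (auto simp: kbok_def inj_on_def apos_def off1_def off2_def off3_def NN_def)

definition Zc :: "nat \<Rightarrow> bool list \<Rightarrow> bool" where
  "Zc n ys \<longleftrightarrow> (\<forall>k. off1 n \<le> k \<and> k < NN n \<longrightarrow> \<not> ys ! k)"

lemma Zc_region:
  assumes "Zc n ys" "off1 n \<le> off" "off + 2*p*q \<le> NN n"
  shows "\<forall>k. off \<le> k \<and> k < off + 2*p*q \<longrightarrow> \<not> ys ! k"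
  using assms by (auto simp: Zc_def)

lemma setl_above: "(\<forall>i<p. g i < b) \<Longrightarrow> b \<le> k \<Longrightarrow> setl ys g p c ! k = ys ! k"
proof -
  assume a: "\<forall>i<p. g i < b" "b \<le> k"
  hence "k \<notin> g ` {..<p}" by force
  thus ?thesis by (rule setl_other)
qed

lemma Zc_setl: "(\<forall>i<p. g i < off1 n) \<Longrightarrow> Zc n (setl ys g p c) = Zc n ys"
  unfolding Zc_def using setl_above[of p g "off1 n"] by auto

lemma KB_step:
  assumes ok: "kbok tg sr off p q (NN n)" and reg: "off1 n \<le> off" and tgl: "\<forall>i<p. tg i < off1 n"
    and len: "length ys = NN n"
    and \<chi>0: "\<And>Y. length Y = NN n \<Longrightarrow> \<not> Zc n Y \<Longrightarrow> \<chi> Y = 0"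
  shows "run_circuit (KB tg sr \<theta> off p q) \<chi> ys =
     (if Zc n ys then (\<Sum>c\<in>blists p. (\<Prod>i<p. Mk (phi sr \<theta> q ys i) (ys ! tg i) (c ! i)) * \<chi> (setl ys tg p c)) else 0)"
proof -
  have r: "run_circuit (KB tg sr \<theta> off p q) \<chi> ys = (\<Sum>c\<in>blists p. Kk tg sr \<theta> off p q ys c * \<chi> (setl ys tg p c))"
    by (rule run_KB_gen[OF ok len])
  show ?thesis
  proof (cases "Zc n ys")
    case True
    have reg2: "off + 2*p*q \<le> NN n" using ok by (simp add: kbok_def)
    have z: "\<forall>k. off \<le> k \<and> k < off + 2*p*q \<longrightarrow> \<not> ys ! k" by (rule Zc_region[OF True reg reg2])
    show ?thesis using True r Kk_zero[OF ok len z] by simp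
  next
    case False
    have "\<And>c. \<chi> (setl ys tg p c) = 0" using \<chi>0 Zc_setl[OF tgl] False len by simp
    then show ?thesis using False r by simp
  qed
qed


lemma take_setl: "(\<forall>i<p. b \<le> g i) \<Longrightarrow> take b (setl ys g p c) = take b ys"
proof (rule nth_equalityI)
  assume a: "\<forall>i<p. b \<le> g i"
  show "length (take b (setl ys g p c)) = length (take b ys)" by simp
  fix k assume "k < length (take b (setl ys g p c))"
  hence "k < b" by simp
  hence "k \<notin> g ` {..<p}" using a by force
  thus "take b (setl ys g p c) ! k = take b ys ! k" using \<open>k < b\<close> by (simp add: setl_other)
qed

lemma setl_below: "(\<forall>i<p. b \<le> g i) \<Longrightarrow> k < b \<Longrightarrow> setl ys g p c ! k = ys ! k"
proof -
  assume a: "\<forall>i<p. b \<le> g i" "k < b"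
  hence "k \<notin> g ` {..<p}" by force
  thus ?thesis by (rule setl_other)
qed

lemma prod_01: "(\<Prod>i<(p::nat). if Q i then (1::complex) else 0) = (if \<forall>i<p. Q i then 1 else 0)"
proof (cases "\<forall>i<p. Q i")
  case True then show ?thesis by simp
next
  case False
  then obtain i where "i < p" "\<not> Q i" by blast
  have "(\<Prod>i<p. if Q i then (1::complex) else 0) = 0"
    by (rule prod_zero) (use \<open>i < p\<close> \<open>\<not> Q i\<close> in auto)
  then show ?thesis using False by simp
qed

lemma sum_blists1: "sum f (blists 1) = f [False] + f [True]"
proof -
  have "sum f (blists (Suc 0)) = (\<Sum>c\<in>blists 0. \<Sum>b\<in>UNIV. f (c @ [b]))" by (rule sum_blists_Suc)
  also have "blists 0 = {[]}" by (auto simp: blists_def)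
  finally show ?thesis by (simp add: UNIV_bool)
qed

lemma sum_blists1': "sum f (blists (Suc 0)) = f [False] + f [True]"
  using sum_blists1 by simp

lemma blists_eqI: "c \<in> blists p \<Longrightarrow> v \<in> blists p \<Longrightarrow> (\<forall>i<p. c ! i = v ! i) \<Longrightarrow> c = v"
  by (simp add: blists_def nth_equalityI)

lemma sum_blists_single:
  fixes f :: "bool list \<Rightarrow> complex"
  assumes "v \<in> blists p" "\<And>c. c \<in> blists p \<Longrightarrow> \<not> (\<forall>i<p. c ! i = v ! i) \<Longrightarrow> f c = 0"
  shows "sum f (blists p) = f v"
proof (rule sum_single)
  fix c assume c: "c \<in> blists p" "c \<noteq> v"
  hence "\<not> (\<forall>i<p. c ! i = v ! i)" using blists_eqI[OF c(1) assms(1)] by blast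
  thus "f c = 0" using assms(2) c(1) by blast
qed (use assms in auto)

definition anc0 :: "nat \<Rightarrow> bool list \<Rightarrow> bool" where
  "anc0 n ys \<longleftrightarrow> (\<forall>k. Suc n \<le> k \<and> k < NN n \<longrightarrow> \<not> ys ! k)"
definition az :: "nat \<Rightarrow> bool list \<Rightarrow> bool" where
  "az n ys \<longleftrightarrow> (\<forall>t<PP n. \<not> ys ! apos n t)"
definition sz :: "nat \<Rightarrow> bool list \<Rightarrow> bool" where
  "sz n ys \<longleftrightarrow> (\<forall>k<mm n. \<not> ys ! rr n k)"
definition parv :: "nat \<Rightarrow> bool list \<Rightarrow> nat \<Rightarrow> bool" where
  "parv n ys t = odd (cntb (mm n) (\<lambda>k. ys ! rr n k) (Suc t))"
definition appar :: "nat \<Rightarrow> bool list \<Rightarrow> bool" where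
  "appar n ys \<longleftrightarrow> (\<forall>t<PP n. ys ! apos n t = parv n ys t)"
definition A1 :: "nat \<Rightarrow> bool list \<Rightarrow> complex" where
  "A1 n ys = (\<Prod>k<mm n. Mk (phi (\<lambda>j. j) th1 n ys k) (ys ! rr n k) False)"
definition ORx :: "nat \<Rightarrow> bool list \<Rightarrow> bool" where
  "ORx n ys \<longleftrightarrow> (\<exists>j<n. ys ! j)"
definition ORs :: "nat \<Rightarrow> bool list \<Rightarrow> bool" where
  "ORs n ys \<longleftrightarrow> (\<exists>k<mm n. ys ! rr n k)"

lemma anc0_iff: "anc0 n ys \<longleftrightarrow> Zc n ys \<and> az n ys \<and> sz n ys"
proof
  assume a: "anc0 n ys"
  show "Zc n ys \<and> az n ys \<and> sz n ys"
    using a unfolding anc0_def Zc_def az_def sz_def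
    by (auto simp: apos_def rr_def off1_def off2_def off3_def NN_def)
next
  assume a: "Zc n ys \<and> az n ys \<and> sz n ys"
  show "anc0 n ys" unfolding anc0_def
  proof (intro allI impI)
    fix k assume k: "Suc n \<le> k \<and> k < NN n"
    show "\<not> ys ! k"
    proof (cases "k < Suc n + mm n")
      case True
      hence "k = rr n (k - Suc n)" "k - Suc n < mm n" using k by (auto simp: rr_def)
      then show ?thesis using a unfolding sz_def by metis
    next
      case False
      show ?thesis
      proof (cases "k < off1 n")
        case True
        hence "k = apos n (k - Suc n - mm n)" "k - Suc n - mm n < PP n" using k False
          by (auto simp: apos_def off1_def)
        then show ?thesis using a unfolding az_def by metis
      next
        case False
        then show ?thesis using a k unfolding Zc_def by auto
      qed
    qed
  qed
qed

lemma phi_1: "phi (\<lambda>j. j) th1 n ys k = pi * real (\<Sum>j<n. if ys ! j then 1 else 0) / 2^k"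
proof -
  have "pi * real (\<Sum>j<n. if ys ! j then 1 else 0) / 2^k = (\<Sum>j<n. pi * real (if ys ! j then 1 else 0) / 2^k)"
    by (simp add: of_nat_sum sum_distrib_left sum_divide_distrib)
  also have "\<dots> = phi (\<lambda>j. j) th1 n ys k" unfolding phi_def th1_def by (intro sum.cong refl) auto
  finally show ?thesis by simp
qed

lemma phi_1i: "phi (\<lambda>j. j) th1i n ys k = - phi (\<lambda>j. j) th1 n ys k"
  unfolding phi_def th1_def th1i_def by (simp add: sum_negf[symmetric] if_distrib cong: if_cong)

lemma phi_a: "phi (rr n) tha (mm n) ys t = pi * real (cntb (mm n) (\<lambda>k. ys ! rr n k) (Suc t))"
proof -
  have "pi * real (cntb (mm n) (\<lambda>k. ys ! rr n k) (Suc t)) = (\<Sum>k<mm n. pi * real (if bit (Suc t) k \<and> ys ! rr n k then 1 else 0))"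
    unfolding cntb_def by (simp add: of_nat_sum sum_distrib_left)
  also have "\<dots> = phi (rr n) tha (mm n) ys t" unfolding phi_def tha_def by (intro sum.cong refl) auto
  finally show ?thesis by simp
qed


lemma wc_le: "(\<Sum>j<n. if ys ! j then 1 else 0) \<le> (n::nat)"
proof -
  have "(\<Sum>j<n. if ys ! j then 1 else (0::nat)) \<le> (\<Sum>j<n. 1)" by (intro sum_mono) auto
  thus ?thesis by simp
qed

lemma wc_zero: "((\<Sum>j<n. if ys ! j then 1 else (0::nat)) = 0) \<longleftrightarrow> \<not> ORx n ys"
  by (auto simp: ORx_def)

lemma A1_OR:
  assumes "A1 n ys \<noteq> 0"
  shows "ORs n ys = ORx n ys"
proof (cases "ORx n ys")
  case False
  hence w: "(\<Sum>j<n. if ys ! j then 1 else (0::nat)) = 0" using wc_zero by blast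
  have "A1 n ys = (\<Prod>k<mm n. if \<not> ys ! rr n k then 1 else 0)"
    unfolding A1_def phi_1 w by (intro prod.cong refl) (simp add: Mk_zero)
  hence "\<forall>k<mm n. \<not> ys ! rr n k" using assms by (simp add: prod_01 split: if_splits)
  then show ?thesis using False by (simp add: ORs_def)
next
  case True
  define w where "w = (\<Sum>j<n. if ys ! j then 1 else (0::nat))"
  have "w \<noteq> 0" using True wc_zero[where n=n and ys=ys] unfolding w_def by blast
  hence w0: "0 < w" by simp
  have wm: "w < 2 ^ mm n" using wc_le[where n=n and ys=ys] mm_gt[of n] unfolding w_def by simp
  show ?thesis
  proof (rule ccontr)
    assume "ORs n ys \<noteq> ORx n ys"
    hence s: "\<forall>k<mm n. \<not> ys ! rr n k" using True by (simp add: ORs_def)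
    obtain v d where vd: "w = 2^v * d" "odd d" using two_adic[OF w0] by blast
    have "2^v \<le> w" using vd by (cases d) auto
    hence "2^v < (2::nat) ^ mm n" using wm by (rule le_less_trans)
    hence v: "v < mm n" by simp
    have "phi (\<lambda>j. j) th1 n ys v = pi * real d"
      unfolding phi_1 w_def[symmetric] vd(1) by (simp add: field_simps)
    hence "Mk (phi (\<lambda>j. j) th1 n ys v) (ys ! rr n v) False = 0"
      using s v vd(2) by (simp add: Mk_pi_nat)
    hence "A1 n ys = 0" unfolding A1_def by (intro prod_zero) (use v in auto)
    thus False using assms by simp
  qed
qed


section \<open>Stepwise amplitude computation\<close>

lemma NN_ge: "Suc n + AA n = NN n"
  by (simp add: AA_def NN_def off3_def off2_def off1_def)

lemma W_val:
  assumes "length ys = NN n"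
  shows "with_ancillas (Suc n) (AA n) \<psi> ys = (if anc0 n ys then \<psi> (take (Suc n) ys) else 0)"
proof -
  have "(drop (Suc n) ys = replicate (AA n) False) \<longleftrightarrow> anc0 n ys"
  proof
    assume d: "drop (Suc n) ys = replicate (AA n) False"
    show "anc0 n ys" unfolding anc0_def
    proof (intro allI impI)
      fix k assume k: "Suc n \<le> k \<and> k < NN n"
      hence "drop (Suc n) ys ! (k - Suc n) = ys ! k" using assms by simp
      moreover have "k - Suc n < AA n" using k unfolding AA_def by arith
      ultimately show "\<not> ys ! k" using d by simp
    qed
  next
    assume a: "anc0 n ys"
    show "drop (Suc n) ys = replicate (AA n) False"
    proof (rule nth_equalityI)
      show "length (drop (Suc n) ys) = length (replicate (AA n) False)" using assms by (simp add: AA_def)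
      fix i assume "i < length (drop (Suc n) ys)"
      hence "Suc n + i < NN n" using assms by simp
      thus "drop (Suc n) ys ! i = replicate (AA n) False ! i"
        using a assms by (simp add: anc0_def AA_def)
    qed
  qed
  thus ?thesis unfolding with_ancillas_def NN_ge using assms by simp
qed

lemma rr_lt_off1: "k < mm n \<Longrightarrow> rr n k < off1 n" by (simp add: rr_def off1_def)
lemma apos_lt_off1: "t < PP n \<Longrightarrow> apos n t < off1 n" by (simp add: apos_def off1_def)
lemma off1_NN: "off1 n \<le> NN n" by (simp add: NN_def off3_def off2_def)

lemma rr_lt: "k < mm n \<Longrightarrow> rr n k < Suc n + mm n" by (simp add: rr_def)
lemma rr_ge: "Suc n \<le> rr n k" by (simp add: rr_def)
lemma apos_ge: "Suc n + mm n \<le> apos n t" by (simp add: apos_def)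

lemma az_setl_rr: "az n (setl ys (rr n) (mm n) c) = az n ys"
  unfolding az_def using setl_above[of "mm n" "rr n" "Suc n + mm n" "apos n _" ys c] rr_lt apos_ge by auto

lemma sz_setl_rr: "length ys = NN n \<Longrightarrow> c \<in> blists (mm n) \<Longrightarrow> sz n (setl ys (rr n) (mm n) c) = (\<forall>k<mm n. \<not> c ! k)"
proof -
  assume l: "length ys = NN n" "c \<in> blists (mm n)"
  have inj: "inj_on (rr n) {..<mm n}" by (simp add: inj_on_def rr_def)
  have "\<And>k. k < mm n \<Longrightarrow> setl ys (rr n) (mm n) c ! rr n k = c ! k"
    using setl_at[OF inj] rr_lt_off1 off1_NN l by (metis less_le_trans)
  thus ?thesis by (simp add: sz_def)
qed

lemma take_setl_rr: "take (Suc n) (setl ys (rr n) p c) = take (Suc n) ys"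
  by (rule take_setl) (simp add: rr_def)

lemma S1:
  assumes len: "length ys = NN n"
  shows "run_circuit (KB1 n) (with_ancillas (Suc n) (AA n) \<psi>) ys =
    (if Zc n ys \<and> az n ys then A1 n ys * \<psi> (take (Suc n) ys) else 0)"
proof -
  let ?W = "with_ancillas (Suc n) (AA n) \<psi>"
  have W0: "\<And>Y. length Y = NN n \<Longrightarrow> \<not> Zc n Y \<Longrightarrow> ?W Y = 0"
    by (simp add: W_val anc0_iff)
  have step: "run_circuit (KB1 n) ?W ys = (if Zc n ys then (\<Sum>c\<in>blists (mm n).
      (\<Prod>i<mm n. Mk (phi (\<lambda>j. j) th1 n ys i) (ys ! rr n i) (c ! i)) * ?W (setl ys (rr n) (mm n) c)) else 0)"
    unfolding KB1_def by (rule KB_step[OF kbok1 order_refl _ len W0]) (auto simp: rr_lt_off1)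
  show ?thesis
  proof (cases "Zc n ys")
    case False then show ?thesis using step by simp
  next
    case True
    have Wc: "?W (setl ys (rr n) (mm n) c) = (if az n ys \<and> (\<forall>k<mm n. \<not> c ! k) then \<psi> (take (Suc n) ys) else 0)"
      if "c \<in> blists (mm n)" for c
      using W_val[where ys="setl ys (rr n) (mm n) c" and n=n and \<psi>=\<psi>] len True that
      by (auto simp: anc0_iff Zc_setl rr_lt_off1 az_setl_rr sz_setl_rr take_setl_rr)
    have v: "replicate (mm n) False \<in> blists (mm n)" by (simp add: blists_def)
    have "(\<Sum>c\<in>blists (mm n). (\<Prod>i<mm n. Mk (phi (\<lambda>j. j) th1 n ys i) (ys ! rr n i) (c ! i)) * ?W (setl ys (rr n) (mm n) c))
       = (\<Prod>i<mm n. Mk (phi (\<lambda>j. j) th1 n ys i) (ys ! rr n i) (replicate (mm n) False ! i)) * ?W (setl ys (rr n) (mm n) (replicate (mm n) False))"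
      by (rule sum_blists_single[OF v]) (auto simp: Wc)
    also have "\<dots> = (if az n ys then A1 n ys * \<psi> (take (Suc n) ys) else 0)"
      using Wc[OF v] by (simp add: A1_def)
    finally show ?thesis using step True by simp
  qed
qed


lemma A1_cong: "(\<forall>j<n. Y' ! j = Y ! j) \<Longrightarrow> (\<forall>k<mm n. Y' ! rr n k = Y ! rr n k) \<Longrightarrow> A1 n Y' = A1 n Y"
  unfolding A1_def phi_def by (intro prod.cong refl) (auto intro!: sum.cong)

lemma parv_cong: "(\<forall>k<mm n. Y' ! rr n k = Y ! rr n k) \<Longrightarrow> parv n Y' = parv n Y"
  unfolding parv_def cntb_def by (intro ext) (auto intro!: sum.cong arg_cong[where f=odd])

lemma apos_inj: "inj_on (apos n) {..<p}" by (simp add: inj_on_def apos_def)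

lemma setl_apos_lo: "k < Suc n + mm n \<Longrightarrow> setl ys (apos n) p c ! k = ys ! k"
  by (rule setl_below[where p=p and g="apos n" and b="Suc n + mm n"]) (auto simp: apos_def)

lemma setl_apos_at: "length ys = NN n \<Longrightarrow> t < PP n \<Longrightarrow> setl ys (apos n) (PP n) c ! apos n t = c ! t"
  using setl_at[OF apos_inj, where i=t and p="PP n" and ys=ys and c=c] apos_lt_off1[of t n] off1_NN[of n] by simp

lemma take_setl_apos: "take (Suc n) (setl ys (apos n) p c) = take (Suc n) ys"
  by (rule take_setl) (simp add: apos_def)

lemma A1_setl_apos: "A1 n (setl ys (apos n) p c) = A1 n ys"
  by (rule A1_cong) (auto simp: setl_apos_lo rr_def)

lemma parv_setl_apos: "parv n (setl ys (apos n) p c) = parv n ys"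
  by (rule parv_cong) (auto simp: setl_apos_lo rr_def)

lemma Mk_parv: "Mk (phi (rr n) tha (mm n) ys t) a d = (if (a = d) = (\<not> parv n ys t) then 1 else 0)"
  unfolding phi_a Mk_pi_nat parv_def by simp

lemma S2:
  assumes len: "length ys = NN n"
    and h: "\<And>Y. length Y = NN n \<Longrightarrow> \<chi> Y = (if Zc n Y \<and> az n Y then A1 n Y * F (take (Suc n) Y) else 0)"
  shows "run_circuit (KBa n) \<chi> ys = (if Zc n ys \<and> appar n ys then A1 n ys * F (take (Suc n) ys) else 0)"
proof -
  have c0: "\<And>Y. length Y = NN n \<Longrightarrow> \<not> Zc n Y \<Longrightarrow> \<chi> Y = 0" using h by simp
  have reg: "off1 n \<le> off2 n" by (simp add: off2_def)
  have step: "run_circuit (KBa n) \<chi> ys = (if Zc n ys then (\<Sum>c\<in>blists (PP n).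
      (\<Prod>i<PP n. Mk (phi (rr n) tha (mm n) ys i) (ys ! apos n i) (c ! i)) * \<chi> (setl ys (apos n) (PP n) c)) else 0)"
    unfolding KBa_def by (rule KB_step[OF kboka reg _ len c0]) (auto simp: apos_lt_off1)
  show ?thesis
  proof (cases "Zc n ys")
    case False then show ?thesis using step by simp
  next
    case True
    have cc: "\<chi> (setl ys (apos n) (PP n) c) = (if (\<forall>t<PP n. \<not> c ! t) then A1 n ys * F (take (Suc n) ys) else 0)"
      for c
    proof -
      have "az n (setl ys (apos n) (PP n) c) = (\<forall>t<PP n. \<not> c ! t)"
        using len by (simp add: az_def setl_apos_at)
      thus ?thesis using h[of "setl ys (apos n) (PP n) c"] len True
        by (auto simp: Zc_setl apos_lt_off1 A1_setl_apos take_setl_apos)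
    qed
    have v: "replicate (PP n) False \<in> blists (PP n)" by (simp add: blists_def)
    have "(\<Sum>c\<in>blists (PP n). (\<Prod>i<PP n. Mk (phi (rr n) tha (mm n) ys i) (ys ! apos n i) (c ! i)) * \<chi> (setl ys (apos n) (PP n) c))
       = (\<Prod>i<PP n. Mk (phi (rr n) tha (mm n) ys i) (ys ! apos n i) (replicate (PP n) False ! i)) * \<chi> (setl ys (apos n) (PP n) (replicate (PP n) False))"
      by (rule sum_blists_single[OF v]) (auto simp: cc)
    also have "\<dots> = (\<Prod>i<PP n. if ys ! apos n i = parv n ys i then 1 else 0) * (A1 n ys * F (take (Suc n) ys))"
      by (simp add: cc Mk_parv)
    also have "\<dots> = (if appar n ys then A1 n ys * F (take (Suc n) ys) else 0)"
      by (auto simp: prod_01 appar_def)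
    finally show ?thesis using step True by simp
  qed
qed


lemma phi_z:
  assumes n1: "1 \<le> n" and ap: "appar n ys"
  shows "phi (apos n) (thz n) (PP n) ys 0 = (if ORs n ys then pi else 0)"
proof -
  have "phi (apos n) (thz n) (PP n) ys 0 = (\<Sum>t<PP n. if parv n ys t then pi / 2^(mm n - 1) else 0)"
    unfolding phi_def thz_def using ap by (intro sum.cong refl) (simp add: appar_def)
  also have "\<dots> = pi / 2^(mm n - 1) * (\<Sum>t<PP n. if odd (cntb (mm n) (\<lambda>k. ys ! rr n k) (Suc t)) then (1::real) else 0)"
    by (simp add: sum_distrib_left parv_def if_distrib cong: if_cong)
  also have "\<dots> = pi / 2^(mm n - 1) * (if ORs n ys then 2^mm n / 2 else 0)"
    using count_odd[OF PP_Suc[of n], of "\<lambda>k. ys ! rr n k"] by (simp add: ORs_def)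
  also have "\<dots> = (if ORs n ys then pi else 0)"
  proof -
    have "(2::real)^mm n = 2 * 2^(mm n - 1)" using mm_pos[OF n1]
      by (metis Suc_diff_1 less_le_trans zero_less_one power_Suc)
    thus ?thesis by simp
  qed
  finally show ?thesis .
qed

lemma setl_z: "setl ys (\<lambda>_. n) 1 c = ys[n := c ! 0]"
  by simp

lemma Zc_upd: "Zc n (ys[n := d]) = Zc n ys"
  unfolding Zc_def by (auto simp: nth_list_update off1_def)

lemma appar_upd: "appar n (ys[n := d]) = appar n ys"
proof -
  have "parv n (ys[n := d]) = parv n ys" by (rule parv_cong) (auto simp: rr_def nth_list_update)
  thus ?thesis unfolding appar_def by (auto simp: apos_def nth_list_update)
qed

lemma A1_upd: "A1 n (ys[n := d]) = A1 n ys"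
  by (rule A1_cong) (auto simp: rr_def nth_list_update)

lemma take_upd: "n < length ys \<Longrightarrow> take (Suc n) (ys[n := d]) = take n ys @ [d]"
  by (simp add: take_Suc_conv_app_nth)

lemma S3:
  assumes n1: "1 \<le> n" and len: "length ys = NN n"
    and h: "\<And>Y. length Y = NN n \<Longrightarrow> \<chi> Y = (if Zc n Y \<and> appar n Y then A1 n Y * F (take (Suc n) Y) else 0)"
  shows "run_circuit (KBz n) \<chi> ys = (if Zc n ys \<and> appar n ys then A1 n ys * F (take n ys @ [ys ! n \<noteq> ORx n ys]) else 0)"
proof -
  have c0: "\<And>Y. length Y = NN n \<Longrightarrow> \<not> Zc n Y \<Longrightarrow> \<chi> Y = 0" using h by simp
  have reg: "off1 n \<le> off3 n" by (simp add: off3_def off2_def)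
  have nl: "n < length ys" using len by (simp add: NN_def off3_def off2_def off1_def)
  have step: "run_circuit (KBz n) \<chi> ys = (if Zc n ys then (\<Sum>c\<in>blists 1.
      (\<Prod>i<1. Mk (phi (apos n) (thz n) (PP n) ys i) (ys ! n) (c ! i)) * \<chi> (setl ys (\<lambda>_. n) 1 c)) else 0)"
    unfolding KBz_def by (rule KB_step[OF kbokz reg _ len c0]) (auto simp: off1_def)
  have cc: "\<chi> (ys[n := d]) = (if Zc n ys \<and> appar n ys then A1 n ys * F (take n ys @ [d]) else 0)" for d
    using h[of "ys[n := d]"] len nl by (simp add: Zc_upd appar_upd A1_upd take_upd)
  show ?thesis
  proof (cases "Zc n ys \<and> appar n ys")
    case False
    then show ?thesis using step cc by (auto simp: sum_blists1)
  next
    case True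
    let ?M = "Mk (phi (apos n) (thz n) (PP n) ys 0) (ys ! n)"
    have "run_circuit (KBz n) \<chi> ys = ?M False * (A1 n ys * F (take n ys @ [False])) + ?M True * (A1 n ys * F (take n ys @ [True]))"
      using step True by (simp add: sum_blists1' cc)
    also have "\<dots> = A1 n ys * F (take n ys @ [ys ! n \<noteq> ORs n ys])"
      using phi_z[OF n1] True by (cases "ys ! n"; cases "ORs n ys") (simp_all add: Mk_pi Mk_zero)
    also have "\<dots> = A1 n ys * F (take n ys @ [ys ! n \<noteq> ORx n ys])"
      using A1_OR[of n ys] by (cases "A1 n ys = 0") auto
    finally show ?thesis using True by simp
  qed
qed


lemma S4:
  assumes len: "length ys = NN n"
    and h: "\<And>Y. length Y = NN n \<Longrightarrow> \<chi> Y = (if Zc n Y \<and> appar n Y then A1 n Y * F (take n Y @ [Y ! n \<noteq> ORx n Y]) else 0)"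
  shows "run_circuit (KBa n) \<chi> ys = (if Zc n ys \<and> az n ys then A1 n ys * F (take n ys @ [ys ! n \<noteq> ORx n ys]) else 0)"
proof -
  let ?G = "F (take n ys @ [ys ! n \<noteq> ORx n ys])"
  have c0: "\<And>Y. length Y = NN n \<Longrightarrow> \<not> Zc n Y \<Longrightarrow> \<chi> Y = 0" using h by simp
  have reg: "off1 n \<le> off2 n" by (simp add: off2_def)
  have step: "run_circuit (KBa n) \<chi> ys = (if Zc n ys then (\<Sum>c\<in>blists (PP n).
      (\<Prod>i<PP n. Mk (phi (rr n) tha (mm n) ys i) (ys ! apos n i) (c ! i)) * \<chi> (setl ys (apos n) (PP n) c)) else 0)"
    unfolding KBa_def by (rule KB_step[OF kboka reg _ len c0]) (auto simp: apos_lt_off1)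
  show ?thesis
  proof (cases "Zc n ys")
    case False then show ?thesis using step by simp
  next
    case True
    have cc: "\<chi> (setl ys (apos n) (PP n) c) = (if (\<forall>t<PP n. c ! t = parv n ys t) then A1 n ys * ?G else 0)"
      for c
    proof -
      have "appar n (setl ys (apos n) (PP n) c) = (\<forall>t<PP n. c ! t = parv n ys t)"
        using len by (simp add: appar_def setl_apos_at parv_setl_apos)
      moreover have "ORx n (setl ys (apos n) (PP n) c) = ORx n ys"
        unfolding ORx_def by (auto simp: setl_apos_lo)
      moreover have "take n (setl ys (apos n) (PP n) c) = take n ys"
        by (rule take_setl) (simp add: apos_def)
      moreover have "setl ys (apos n) (PP n) c ! n = ys ! n" by (simp add: setl_apos_lo)
      ultimately show ?thesis using h[of "setl ys (apos n) (PP n) c"] len True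
        by (auto simp: Zc_setl apos_lt_off1 A1_setl_apos)
    qed
    define v where "v = map (parv n ys) [0..<PP n]"
    have v: "v \<in> blists (PP n)" by (simp add: blists_def v_def)
    have vi: "\<And>t. t < PP n \<Longrightarrow> v ! t = parv n ys t" by (simp add: v_def)
    have "(\<Sum>c\<in>blists (PP n). (\<Prod>i<PP n. Mk (phi (rr n) tha (mm n) ys i) (ys ! apos n i) (c ! i)) * \<chi> (setl ys (apos n) (PP n) c))
       = (\<Prod>i<PP n. Mk (phi (rr n) tha (mm n) ys i) (ys ! apos n i) (v ! i)) * \<chi> (setl ys (apos n) (PP n) v)"
      by (rule sum_blists_single[OF v]) (auto simp: cc vi)
    also have "\<dots> = (\<Prod>i<PP n. if \<not> ys ! apos n i then 1 else 0) * (A1 n ys * ?G)"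
    proof -
      have "(\<Prod>i<PP n. Mk (phi (rr n) tha (mm n) ys i) (ys ! apos n i) (v ! i)) = (\<Prod>i<PP n. if \<not> ys ! apos n i then 1 else 0)"
        by (intro prod.cong refl) (auto simp: Mk_parv vi)
      thus ?thesis by (simp add: cc vi)
    qed
    also have "\<dots> = (if az n ys then A1 n ys * ?G else 0)"
      by (auto simp: prod_01 az_def)
    finally show ?thesis using step True by simp
  qed
qed


lemma phi1_setl_rr: "phi (\<lambda>j. j) th1 n (setl ys (rr n) p c) k = phi (\<lambda>j. j) th1 n ys k"
  unfolding phi_def
  by (intro sum.cong refl) (simp add: setl_below[where p=p and g="rr n" and b="Suc n"] rr_def)

lemma S5:
  assumes len: "length ys = NN n"
    and h: "\<And>Y. length Y = NN n \<Longrightarrow> \<chi> Y = (if Zc n Y \<and> az n Y then A1 n Y * F (take n Y @ [Y ! n \<noteq> ORx n Y]) else 0)"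
  shows "run_circuit (KB1i n) \<chi> ys = (if anc0 n ys then F (take n ys @ [ys ! n \<noteq> ORx n ys]) else 0)"
proof -
  let ?G = "F (take n ys @ [ys ! n \<noteq> ORx n ys])"
  let ?ph = "phi (\<lambda>j. j) th1 n ys"
  have c0: "\<And>Y. length Y = NN n \<Longrightarrow> \<not> Zc n Y \<Longrightarrow> \<chi> Y = 0" using h by simp
  have ok: "kbok (rr n) (\<lambda>j. j) (off1 n) (mm n) n (NN n)" by (rule kbok1)
  have step: "run_circuit (KB1i n) \<chi> ys = (if Zc n ys then (\<Sum>c\<in>blists (mm n).
      (\<Prod>i<mm n. Mk (phi (\<lambda>j. j) th1i n ys i) (ys ! rr n i) (c ! i)) * \<chi> (setl ys (rr n) (mm n) c)) else 0)"
    unfolding KB1i_def by (rule KB_step[OF ok order_refl _ len c0]) (auto simp: rr_lt_off1)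
  show ?thesis
  proof (cases "Zc n ys \<and> az n ys")
    case False
    have "\<And>c. \<chi> (setl ys (rr n) (mm n) c) = 0"
      using h len False by (auto simp: Zc_setl rr_lt_off1 az_setl_rr)
    then show ?thesis using step False by (auto simp: anc0_iff)
  next
    case True
    have inj: "inj_on (rr n) {..<mm n}" by (simp add: inj_on_def rr_def)
    have cc: "\<chi> (setl ys (rr n) (mm n) c) = (\<Prod>k<mm n. Mk (?ph k) (c ! k) False) * ?G" for c
    proof -
      have at: "\<And>k. k < mm n \<Longrightarrow> setl ys (rr n) (mm n) c ! rr n k = c ! k"
        using setl_at[OF inj] rr_lt_off1 off1_NN len by (metis less_le_trans)
      have lo: "\<And>k. k < Suc n \<Longrightarrow> setl ys (rr n) (mm n) c ! k = ys ! k"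
        by (simp add: setl_below[where p="mm n" and g="rr n" and b="Suc n"] rr_def)
      have "A1 n (setl ys (rr n) (mm n) c) = (\<Prod>k<mm n. Mk (?ph k) (c ! k) False)"
        unfolding A1_def phi1_setl_rr by (intro prod.cong refl) (simp add: at)
      moreover have "ORx n (setl ys (rr n) (mm n) c) = ORx n ys" unfolding ORx_def by (auto simp: lo)
      moreover have "take n (setl ys (rr n) (mm n) c) = take n ys" by (rule take_setl) (simp add: rr_def)
      ultimately show ?thesis using h[of "setl ys (rr n) (mm n) c"] len True lo[of n]
        by (simp add: Zc_setl rr_lt_off1 az_setl_rr)
    qed
    have "(\<Sum>c\<in>blists (mm n). (\<Prod>i<mm n. Mk (phi (\<lambda>j. j) th1i n ys i) (ys ! rr n i) (c ! i)) * \<chi> (setl ys (rr n) (mm n) c))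
        = (\<Sum>c\<in>blists (mm n). \<Prod>k<mm n. Mk (- ?ph k) (ys ! rr n k) (c ! k) * Mk (?ph k) (c ! k) False) * ?G"
      by (simp add: cc phi_1i sum_distrib_right prod.distrib mult.assoc)
    also have "\<dots> = (\<Prod>k<mm n. if \<not> ys ! rr n k then 1 else 0) * ?G"
      by (subst sum_prod_blists) (simp add: Mk_inv if_not_P, intro disjI2 prod.cong refl, auto)
    also have "\<dots> = (if sz n ys then ?G else 0)" by (auto simp: prod_01 sz_def)
    finally show ?thesis using step True by (simp add: anc0_iff)
  qed
qed


lemma apply_len0:
  assumes "\<And>Y. length Y \<noteq> N \<Longrightarrow> \<psi> Y = 0" "length ys \<noteq> N"
  shows "apply_gate g \<psi> ys = 0"
  using assms by (cases g) auto

lemma run_len0: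
  assumes "\<And>Y. length Y \<noteq> N \<Longrightarrow> \<psi> Y = 0" "length ys \<noteq> N"
  shows "run_circuit C \<psi> ys = 0"
  using assms
proof (induction C arbitrary: \<psi>)
  case Nil then show ?case by simp
next
  case (Cons g C)
  have "\<And>Y. length Y \<noteq> N \<Longrightarrow> apply_gate g \<psi> Y = 0" using apply_len0 Cons.prems(1) by blast
  then show ?case using Cons.IH Cons.prems(2) by simp
qed

lemma OR_bits_take: "n \<le> length ys \<Longrightarrow> OR_bits (take n ys) = ORx n ys"
proof -
  assume l: "n \<le> length ys"
  show ?thesis unfolding OR_bits_def ORx_def
  proof
    assume "\<exists>x\<in>set (take n ys). x"
    then obtain x where x: "x \<in> set (take n ys)" "x" by blast
    then obtain i where "i < length (take n ys)" "take n ys ! i = x" by (metis in_set_conv_nth)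
    thus "\<exists>j<n. ys ! j" using x(2) by auto
  next
    assume "\<exists>j<n. ys ! j"
    then obtain j where j: "j < n" "ys ! j" by blast
    hence "take n ys ! j \<in> set (take n ys)" using l by (intro nth_mem) simp
    thus "\<exists>x\<in>set (take n ys). x" using j by auto
  qed
qed

theorem Cn_implements:
  assumes n1: "1 \<le> n"
  shows "implements_OR n (AA n) (Cn n)"
  unfolding implements_OR_def
proof (intro allI ext)
  fix \<psi> :: qstate and ys :: "bool list"
  let ?W = "with_ancillas (Suc n) (AA n) \<psi>"
  show "run_circuit (Cn n) ?W ys = with_ancillas (Suc n) (AA n) (OR_op n \<psi>) ys"
  proof (cases "length ys = NN n")
    case False
    have "\<And>Y. length Y \<noteq> NN n \<Longrightarrow> ?W Y = 0" using NN_ge[of n] by (auto simp: with_ancillas_def)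
    hence "run_circuit (Cn n) ?W ys = 0" using run_len0 False by blast
    moreover have "with_ancillas (Suc n) (AA n) (OR_op n \<psi>) ys = 0" using False NN_ge[of n] by (auto simp: with_ancillas_def)
    ultimately show ?thesis by simp
  next
    case True
    define \<chi>1 where "\<chi>1 = run_circuit (KB1 n) ?W"
    define \<chi>2 where "\<chi>2 = run_circuit (KBa n) \<chi>1"
    define \<chi>3 where "\<chi>3 = run_circuit (KBz n) \<chi>2"
    define \<chi>4 where "\<chi>4 = run_circuit (KBa n) \<chi>3"
    have h1: "\<And>Y. length Y = NN n \<Longrightarrow> \<chi>1 Y = (if Zc n Y \<and> az n Y then A1 n Y * \<psi> (take (Suc n) Y) else 0)"
      unfolding \<chi>1_def by (rule S1)
    have h2: "\<And>Y. length Y = NN n \<Longrightarrow> \<chi>2 Y = (if Zc n Y \<and> appar n Y then A1 n Y * \<psi> (take (Suc n) Y) else 0)"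
      unfolding \<chi>2_def by (rule S2) (simp_all add: h1)
    have h3: "\<And>Y. length Y = NN n \<Longrightarrow> \<chi>3 Y = (if Zc n Y \<and> appar n Y then A1 n Y * \<psi> (take n Y @ [Y ! n \<noteq> ORx n Y]) else 0)"
      unfolding \<chi>3_def by (rule S3[OF n1]) (simp_all add: h2)
    have h4: "\<And>Y. length Y = NN n \<Longrightarrow> \<chi>4 Y = (if Zc n Y \<and> az n Y then A1 n Y * \<psi> (take n Y @ [Y ! n \<noteq> ORx n Y]) else 0)"
      unfolding \<chi>4_def by (rule S4) (simp_all add: h3)
    have "run_circuit (Cn n) ?W ys = run_circuit (KB1i n) \<chi>4 ys"
      unfolding Cn_def run_append \<chi>1_def \<chi>2_def \<chi>3_def \<chi>4_def by (rule refl)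
    also have "\<dots> = (if anc0 n ys then \<psi> (take n ys @ [ys ! n \<noteq> ORx n ys]) else 0)"
      by (rule S5[OF True]) (simp_all add: h4)
    also have "\<dots> = with_ancillas (Suc n) (AA n) (OR_op n \<psi>) ys"
    proof -
      have nl: "Suc n \<le> length ys" using True by (simp add: NN_def off3_def off2_def off1_def)
      show ?thesis
        unfolding W_val[OF True] OR_op_def using nl by (simp add: OR_bits_take)
    qed
    finally show ?thesis .
  qed
qed


section \<open>Well-formedness\<close>

lemma unitary2_Hm: "unitary2 Hm"
proof -
  have s: "complex_of_real (sqrt 2) \<noteq> 0" by simp
  have c: "cnj (complex_of_real (sqrt 2)) = complex_of_real (sqrt 2)" by simp
  show ?thesis unfolding unitary2_def Hm_def
    by (auto simp: UNIV_bool c field_simps Hm_sq)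
qed

lemma unitary2_Pm: "unitary2 (Pm \<theta>)"
proof -
  have "cnj (cis \<theta>) * cis \<theta> = 1" by (simp add: cis_cnj cis_mult)
  thus ?thesis unfolding unitary2_def Pm_def by (auto simp: UNIV_bool)
qed

lemma ttf_distinct: "l < p + q \<Longrightarrow> distinct (ttf off p q l)"
proof (cases "l < p")
  case True then show ?thesis by (simp add: ttf_def distinct_map inj_on_def tcp_def)
next
  case False
  assume l: "l < p + q"
  hence q0: "q > 0" using False by simp
  have "inj_on (\<lambda>i. ucp off p q i (l - p)) {0..<p}"
  proof (rule inj_onI)
    fix x y assume "ucp off p q x (l - p) = ucp off p q y (l - p)"
    hence "x * q = y * q" by (simp add: ucp_def)
    thus "x = y" using q0 by simp
  qed
  with False show ?thesis by (simp add: ttf_def distinct_map)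
qed

lemma ttf_ne: "l < p + q \<Longrightarrow> 1 \<le> p \<Longrightarrow> 1 \<le> q \<Longrightarrow> ttf off p q l \<noteq> []"
  by (auto simp: ttf_def)

lemma wf_KB:
  assumes ok: "kbok tg sr off p q N" and p: "1 \<le> p" and q: "1 \<le> q"
  shows "wf_circuit N (KB tg sr \<theta> off p q)"
proof -
  have N: "off + 2*p*q \<le> N" using ok by (simp add: kbok_def)
  have h: "\<forall>g\<in>set (hl (\<lambda>_. Hm) tg p). wf_gate N g"
    using ok N by (auto simp: hl_def unitary2_Hm kbok_def)
  have f: "\<forall>g\<in>set (fanl tg sr off p q). wf_gate N g"
  proof
    fix g assume "g \<in> set (fanl tg sr off p q)"
    then obtain l where l: "l < p + q" "g = Fanout (ccf tg sr p l) (ttf off p q l)" by (auto simp: fanl_def)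
    have c: "ccf tg sr p l < off" using ok l(1) by (auto simp: ccf_def kbok_def)
    have t: "\<forall>t\<in>set (ttf off p q l). off \<le> t \<and> t < off + 2*p*q" using mem_ttf[OF l(1)] by blast
    show "wf_gate N g" using l c t N ttf_distinct[OF l(1)] ttf_ne[OF l(1) p q]
      by fastforce
  qed
  have c: "\<forall>g\<in>set (cpsl \<theta> off p q). wf_gate N g"
  proof
    fix g assume "g \<in> set (cpsl \<theta> off p q)"
    then obtain i j where ij: "i < p" "j < q" "g \<in> set (cpg (\<theta> i j) (tcp off q i j) (ucp off p q i j))"
      by (auto simp: cpsl_def)
    have a: "tcp off q i j < off + p*q" using tcp_lt ij by simp
    have b: "ucp off p q i j < off + 2*p*q" using ucp_lt ij by simp
    have d: "off + p*q \<le> ucp off p q i j" by (simp add: ucp_def)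
    show "wf_gate N g" using ij(3) a b d N by (auto simp: cpg_def unitary2_Pm)
  qed
  show ?thesis using h f c by (auto simp: wf_circuit_def KB_def)
qed

lemma wf_Cn: "1 \<le> n \<Longrightarrow> wf_circuit (Suc n + AA n) (Cn n)"
  unfolding NN_ge Cn_def KB1_def KB1i_def KBa_def KBz_def
  using wf_KB[OF kbok1] wf_KB[OF kboka] wf_KB[OF kbokz] mm_pos PP_pos
  by (auto simp: wf_circuit_def)


section \<open>Depth\<close>

fun okl :: "(nat \<Rightarrow> nat) \<Rightarrow> (nat \<times> gate) list \<Rightarrow> bool" where
  "okl \<beta> [] = True"
| "okl \<beta> ((l,g) # L) = ((\<forall>q\<in>gate_qubits g. \<beta> q < l) \<and> okl (\<lambda>q. if q \<in> gate_qubits g then l else \<beta> q) L)"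

fun finb :: "(nat \<Rightarrow> nat) \<Rightarrow> (nat \<times> gate) list \<Rightarrow> nat \<Rightarrow> nat" where
  "finb \<beta> [] = \<beta>"
| "finb \<beta> ((l,g) # L) = finb (\<lambda>q. if q \<in> gate_qubits g then l else \<beta> q) L"

definition qs :: "(nat \<times> gate) list \<Rightarrow> nat set" where
  "qs L = (\<Union>x\<in>set L. gate_qubits (snd x))"

lemma okl_append: "okl \<beta> (A @ B) = (okl \<beta> A \<and> okl (finb \<beta> A) B)"
  by (induction \<beta> A rule: finb.induct) auto

lemma okl_mono: "okl \<beta>2 L \<Longrightarrow> (\<forall>q. \<beta>1 q \<le> \<beta>2 q) \<Longrightarrow> okl \<beta>1 L"
proof (induction \<beta>2 L arbitrary: \<beta>1 rule: okl.induct)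
  case (1 \<beta>) then show ?case by simp
next
  case (2 \<beta> l g L)
  have "okl (\<lambda>q. if q \<in> gate_qubits g then l else \<beta>1 q) L"
    by (rule "2.IH") (use "2.prems" in auto)
  then show ?case using "2.prems" by (auto intro: le_less_trans)
qed

lemma finb_le: "(\<forall>q. \<beta> q \<le> a) \<Longrightarrow> (\<forall>x\<in>set A. fst x \<le> a) \<Longrightarrow> finb \<beta> A q \<le> a"
  by (induction \<beta> A rule: finb.induct) auto

lemma okl_seq: "okl \<beta> A \<Longrightarrow> (\<forall>q. \<beta> q \<le> a) \<Longrightarrow> (\<forall>x\<in>set A. fst x \<le> a) \<Longrightarrow> okl (\<lambda>_. a) B \<Longrightarrow> okl \<beta> (A @ B)"
  unfolding okl_append using okl_mono finb_le by blast

lemma finb_out: "q \<notin> qs A \<Longrightarrow> finb \<beta> A q = \<beta> q"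
  by (induction \<beta> A rule: finb.induct) (auto simp: qs_def)

lemma okl_cong: "(\<forall>q\<in>qs L. \<beta> q = \<beta>' q) \<Longrightarrow> okl \<beta> L = okl \<beta>' L"
proof (induction \<beta> L arbitrary: \<beta>' rule: okl.induct)
  case (1 \<beta>) then show ?case by simp
next
  case (2 \<beta> l g L)
  have "okl (\<lambda>q. if q \<in> gate_qubits g then l else \<beta> q) L = okl (\<lambda>q. if q \<in> gate_qubits g then l else \<beta>' q) L"
    by (rule "2.IH") (use "2.prems" in \<open>auto simp: qs_def\<close>)
  moreover have "(\<forall>q\<in>gate_qubits g. \<beta> q < l) = (\<forall>q\<in>gate_qubits g. \<beta>' q < l)" using "2.prems" by (auto simp: qs_def)
  ultimately show ?case by simp
qed

lemma okl_par: "okl \<beta> A \<Longrightarrow> okl \<beta> B \<Longrightarrow> qs A \<inter> qs B = {} \<Longrightarrow> okl \<beta> (A @ B)"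
  unfolding okl_append using okl_cong[of B "finb \<beta> A" \<beta>] finb_out by blast

lemma qs_append: "qs (A @ B) = qs A \<union> qs B" by (simp add: qs_def)
lemma qs_concat: "qs (concat (map F xs)) = (\<Union>i\<in>set xs. qs (F i))" by (auto simp: qs_def)

lemma okl_concat:
  assumes "\<forall>i\<in>set xs. okl \<beta> (F i)" "\<forall>i\<in>set xs. \<forall>j\<in>set xs. i \<noteq> j \<longrightarrow> qs (F i) \<inter> qs (F j) = {}" "distinct xs"
  shows "okl \<beta> (concat (map F xs))"
  using assms
proof (induction xs)
  case Nil then show ?case by simp
next
  case (Cons x xs)
  have "qs (F x) \<inter> qs (concat (map F xs)) = {}" using Cons.prems by (auto simp: qs_concat)
  then show ?case using Cons by (simp add: okl_par)
qed

lemma gq_fin: "finite (gate_qubits g)" by (cases g) auto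
lemma gq_ne: "gate_qubits g \<noteq> {}" by (cases g) auto

lemma depth_okl:
  "okl \<beta> L \<Longrightarrow> (\<forall>q. d q \<le> \<beta> q) \<Longrightarrow> (\<forall>y\<in>set L. fst y \<le> K) \<Longrightarrow> \<forall>x\<in>set (gate_depths d (map snd L)). x \<le> K"
proof (induction \<beta> L arbitrary: d rule: okl.induct)
  case (1 \<beta>) then show ?case by simp
next
  case (2 \<beta> l g L)
  let ?v = "Suc (Max (d ` gate_qubits g))"
  have "Max (d ` gate_qubits g) < l"
    using "2.prems"(1,2) gq_fin[of g] gq_ne[of g] by (auto simp: Max_less_iff intro: le_less_trans)
  hence v: "?v \<le> l" by simp
  have "\<forall>x\<in>set (gate_depths (\<lambda>q. if q \<in> gate_qubits g then ?v else d q) (map snd L)). x \<le> K"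
    by (rule "2.IH") (use "2.prems" v in auto)
  then show ?case using v "2.prems"(3) by (simp add: Let_def)
qed

lemma depth_bound: "okl (\<lambda>_. 0) L \<Longrightarrow> (\<forall>y\<in>set L. fst y \<le> K) \<Longrightarrow> circuit_depth (map snd L) \<le> K"
  unfolding circuit_depth_def using depth_okl[of "\<lambda>_. 0" L "\<lambda>_. 0" K]
  by (auto simp: Max_le_iff)


definition lay :: "nat \<Rightarrow> gate list \<Rightarrow> (nat \<times> gate) list" where "lay l G = map (\<lambda>g. (l, g)) G"

definition cpgL :: "nat \<Rightarrow> real \<Rightarrow> nat \<Rightarrow> nat \<Rightarrow> (nat \<times> gate) list" where
  "cpgL a \<theta> x y = [(a+3, OneQ x (Pm (\<theta>/2))), (a+3, OneQ y (Pm (\<theta>/2))), (a+4, CNOT x y),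
     (a+5, OneQ y (Pm (-\<theta>/2))), (a+6, CNOT x y)]"

definition cpsL :: "nat \<Rightarrow> (nat \<Rightarrow> nat \<Rightarrow> real) \<Rightarrow> nat \<Rightarrow> nat \<Rightarrow> nat \<Rightarrow> (nat \<times> gate) list" where
  "cpsL a \<theta> off p q = concat (map (\<lambda>i. concat (map (\<lambda>j. cpgL a (\<theta> i j) (tcp off q i j) (ucp off p q i j)) [0..<q])) [0..<p])"

definition KBL :: "nat \<Rightarrow> (nat \<Rightarrow> nat) \<Rightarrow> (nat \<Rightarrow> nat) \<Rightarrow> (nat \<Rightarrow> nat \<Rightarrow> real) \<Rightarrow> nat \<Rightarrow> nat \<Rightarrow> nat \<Rightarrow> (nat \<times> gate) list" where
  "KBL a tg sr \<theta> off p q = lay (a+1) (hl (\<lambda>_. Hm) tg p) @ lay (a+2) (fanl tg sr off p q) @ cpsL a \<theta> off p q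
     @ lay (a+7) (fanl tg sr off p q) @ lay (a+8) (hl (\<lambda>_. Hm) tg p)"

lemma map_snd_KBL: "map snd (KBL a tg sr \<theta> off p q) = KB tg sr \<theta> off p q"
  by (simp add: KBL_def KB_def lay_def cpsL_def cpsl_def cpgL_def cpg_def map_concat comp_def)

lemma KBL_layers: "\<forall>y\<in>set (KBL a tg sr \<theta> off p q). a < fst y \<and> fst y \<le> a + 8"
  by (auto simp: KBL_def lay_def cpsL_def cpgL_def)

lemma okl_lay:
  assumes "\<forall>i\<in>set xs. \<forall>j\<in>set xs. i \<noteq> j \<longrightarrow> gate_qubits (f i) \<inter> gate_qubits (f j) = {}" "distinct xs" "b < l"
  shows "okl (\<lambda>_. b) (lay l (map f xs))"
proof -
  have "lay l (map f xs) = concat (map (\<lambda>i. [(l, f i)]) xs)" by (induction xs) (auto simp: lay_def)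
  moreover have "okl (\<lambda>_. b) (concat (map (\<lambda>i. [(l, f i)]) xs))"
    by (rule okl_concat) (use assms in \<open>auto simp: qs_def\<close>)
  ultimately show ?thesis by simp
qed

lemma tcp_inj: "tcp off q i j = tcp off q i' j' \<Longrightarrow> j < q \<Longrightarrow> j' < q \<Longrightarrow> i = i' \<and> j = j'"
  unfolding tcp_def by (metis add_left_cancel divmod_aux1 divmod_aux2 add.assoc)

lemma ucp_inj: "ucp off p q i j = ucp off p q i' j' \<Longrightarrow> j < q \<Longrightarrow> j' < q \<Longrightarrow> i = i' \<and> j = j'"
  unfolding ucp_def by (metis add_left_cancel divmod_aux1 divmod_aux2 add.assoc)

lemma okl_cpsL:
  assumes "kbok tg sr off p q N"
  shows "okl (\<lambda>_. a + 2) (cpsL a \<theta> off p q)"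
  unfolding cpsL_def
proof (rule okl_concat)
  show "\<forall>i\<in>set [0..<p]. okl (\<lambda>_. a + 2) (concat (map (\<lambda>j. cpgL a (\<theta> i j) (tcp off q i j) (ucp off p q i j)) [0..<q]))"
  proof
    fix i assume i: "i \<in> set [0..<p]"
    show "okl (\<lambda>_. a + 2) (concat (map (\<lambda>j. cpgL a (\<theta> i j) (tcp off q i j) (ucp off p q i j)) [0..<q]))"
    proof (rule okl_concat)
      show "\<forall>j\<in>set [0..<q]. okl (\<lambda>_. a + 2) (cpgL a (\<theta> i j) (tcp off q i j) (ucp off p q i j))"
      proof
        fix j assume j: "j \<in> set [0..<q]"
        have "tcp off q i j < off + p*q" using tcp_lt i j by simp
        moreover have "off + p*q \<le> ucp off p q i j" by (simp add: ucp_def)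
        ultimately have "tcp off q i j \<noteq> ucp off p q i j" by simp
        thus "okl (\<lambda>_. a + 2) (cpgL a (\<theta> i j) (tcp off q i j) (ucp off p q i j))" by (simp add: cpgL_def)
      qed
      show "\<forall>j\<in>set [0..<q]. \<forall>j'\<in>set [0..<q]. j \<noteq> j' \<longrightarrow>
          qs (cpgL a (\<theta> i j) (tcp off q i j) (ucp off p q i j)) \<inter> qs (cpgL a (\<theta> i j') (tcp off q i j') (ucp off p q i j')) = {}"
      proof (intro ballI impI)
        fix j j' assume jj: "j \<in> set [0..<q]" "j' \<in> set [0..<q]" "j \<noteq> j'"
        have "tcp off q i j < off + p*q" "tcp off q i j' < off + p*q" using tcp_lt i jj by auto
        moreover have "off + p*q \<le> ucp off p q i j" "off + p*q \<le> ucp off p q i j'" by (simp_all add: ucp_def)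
        moreover have "tcp off q i j \<noteq> tcp off q i j'" "ucp off p q i j \<noteq> ucp off p q i j'"
          using tcp_inj[of off q i j i j'] ucp_inj[of off p q i j i j'] jj by auto
        ultimately show "qs (cpgL a (\<theta> i j) (tcp off q i j) (ucp off p q i j)) \<inter> qs (cpgL a (\<theta> i j') (tcp off q i j') (ucp off p q i j')) = {}"
          by (auto simp: qs_def cpgL_def)
      qed
    qed simp
  qed
  show "\<forall>i\<in>set [0..<p]. \<forall>i'\<in>set [0..<p]. i \<noteq> i' \<longrightarrow>
      qs (concat (map (\<lambda>j. cpgL a (\<theta> i j) (tcp off q i j) (ucp off p q i j)) [0..<q])) \<inter>
      qs (concat (map (\<lambda>j. cpgL a (\<theta> i' j) (tcp off q i' j) (ucp off p q i' j)) [0..<q])) = {}"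
  proof (intro ballI impI)
    fix i i' assume ii: "i \<in> set [0..<p]" "i' \<in> set [0..<p]" "i \<noteq> i'"
    have A: "\<forall>j<q. \<forall>j'<q. tcp off q i j \<noteq> tcp off q i' j'" using tcp_inj ii by blast
    have B: "\<forall>j<q. \<forall>j'<q. ucp off p q i j \<noteq> ucp off p q i' j'" using ucp_inj ii by blast
    have C: "\<forall>j<q. \<forall>j'<q. tcp off q i j \<noteq> ucp off p q i' j' \<and> ucp off p q i j \<noteq> tcp off q i' j'"
    proof (intro allI impI)
      fix j j' assume jj: "j < q" "j' < q"
      have "tcp off q i j < off + p*q" "tcp off q i' j' < off + p*q" using tcp_lt ii jj by auto
      moreover have "off + p*q \<le> ucp off p q i j" "off + p*q \<le> ucp off p q i' j'" by (simp_all add: ucp_def)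
      ultimately show "tcp off q i j \<noteq> ucp off p q i' j' \<and> ucp off p q i j \<noteq> tcp off q i' j'" by auto
    qed
    show "qs (concat (map (\<lambda>j. cpgL a (\<theta> i j) (tcp off q i j) (ucp off p q i j)) [0..<q])) \<inter>
      qs (concat (map (\<lambda>j. cpgL a (\<theta> i' j) (tcp off q i' j) (ucp off p q i' j)) [0..<q])) = {}"
      using A B C by (auto simp: qs_concat qs_def cpgL_def) metis+
  qed
qed simp


lemma ccf_inj:
  assumes ok: "kbok tg sr off p q N" and l: "l < p + q" "l' < p + q" "ccf tg sr p l = ccf tg sr p l'"
  shows "l = l'"
proof -
  have i1: "inj_on tg {..<p}" and i2: "inj_on sr {..<q}" and d: "\<forall>i<p. \<forall>j<q. tg i \<noteq> sr j"
    using ok by (auto simp: kbok_def)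
  show ?thesis
  proof (cases "l < p")
    case True
    show ?thesis
    proof (cases "l' < p")
      case True
      then show ?thesis using \<open>l < p\<close> l(3) i1 by (auto simp: ccf_def inj_on_def)
    next
      case False
      then show ?thesis using \<open>l < p\<close> l d by (auto simp: ccf_def)
    qed
  next
    case False
    show ?thesis
    proof (cases "l' < p")
      case True
      have "l - p < q" using False l(1) by simp
      hence "tg l' \<noteq> sr (l - p)" using d True by blast
      then show ?thesis using True False l(3) by (simp add: ccf_def)
    next
      case F2: False
      hence "l - p = l' - p" using False l i2 by (auto simp: ccf_def inj_on_def)
      then show ?thesis using False F2 by simp
    qed
  qed
qed

lemma fan_disj:
  assumes ok: "kbok tg sr off p q N" and l: "l < p + q" "l' < p + q" "l \<noteq> l'"
  shows "gate_qubits (Fanout (ccf tg sr p l) (ttf off p q l)) \<inter> gate_qubits (Fanout (ccf tg sr p l') (ttf off p q l')) = {}"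
proof -
  have c: "ccf tg sr p l < off" "ccf tg sr p l' < off" using ok l by (auto simp: ccf_def kbok_def)
  have t: "\<forall>k\<in>set (ttf off p q l). off \<le> k \<and> ownf off p q k = l" "\<forall>k\<in>set (ttf off p q l'). off \<le> k \<and> ownf off p q k = l'"
    using mem_ttf l by blast+
  have "ccf tg sr p l \<noteq> ccf tg sr p l'" using ccf_inj[OF ok l(1,2)] l(3) by blast
  thus ?thesis using c t l(3) by fastforce
qed

lemma okl_KBL:
  assumes ok: "kbok tg sr off p q N"
  shows "okl (\<lambda>_. a) (KBL a tg sr \<theta> off p q)"
proof -
  have i1: "inj_on tg {..<p}" using ok by (simp add: kbok_def)
  have H: "b < l \<Longrightarrow> okl (\<lambda>_. b) (lay l (hl (\<lambda>_. Hm) tg p))" for b l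
    unfolding hl_def by (rule okl_lay) (use i1 in \<open>auto simp: inj_on_def\<close>)
  have F: "b < l \<Longrightarrow> okl (\<lambda>_. b) (lay l (fanl tg sr off p q))" for b l
    unfolding fanl_def by (rule okl_lay) (use fan_disj[OF ok] in auto)
  have C: "okl (\<lambda>_. a + 2) (cpsL a \<theta> off p q)" by (rule okl_cpsL[OF ok])
  have Cl: "\<forall>x\<in>set (cpsL a \<theta> off p q). fst x \<le> a + 6" by (auto simp: cpsL_def cpgL_def)
  have L: "\<forall>x\<in>set (lay l G). fst x \<le> l" for l G by (simp add: lay_def)
  show ?thesis unfolding KBL_def
    apply (rule okl_seq[where a="a+1"], rule H, simp, simp, rule L)
    apply (rule okl_seq[where a="a+2"], rule F, simp, simp, rule L)
    apply (rule okl_seq[where a="a+6"], rule C, simp, rule Cl)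
    apply (rule okl_seq[where a="a+7"], rule F, simp, simp, rule L)
    apply (rule H, simp)
    done
qed


definition CnL :: "nat \<Rightarrow> (nat \<times> gate) list" where
  "CnL n = KBL 0 (rr n) (\<lambda>j. j) th1 (off1 n) (mm n) n @ KBL 8 (apos n) (rr n) tha (off2 n) (PP n) (mm n)
    @ KBL 16 (\<lambda>_. n) (apos n) (thz n) (off3 n) 1 (PP n) @ KBL 24 (apos n) (rr n) tha (off2 n) (PP n) (mm n)
    @ KBL 32 (rr n) (\<lambda>j. j) th1i (off1 n) (mm n) n"

lemma depth_Cn: "circuit_depth (Cn n) \<le> 40"
proof -
  have m: "map snd (CnL n) = Cn n"
    by (simp add: CnL_def Cn_def map_snd_KBL KB1_def KB1i_def KBa_def KBz_def)
  have ly: "\<forall>y\<in>set (CnL n). fst y \<le> 40"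
    using KBL_layers[of 0] KBL_layers[of 8] KBL_layers[of 16] KBL_layers[of 24] KBL_layers[of 32]
    unfolding CnL_def by fastforce
  have lb: "\<And>a tg sr \<theta> off p q b. b = a + 8 \<Longrightarrow> \<forall>x\<in>set (KBL a tg sr \<theta> off p q). fst x \<le> b"
    using KBL_layers by fastforce
  have "okl (\<lambda>_. 0) (CnL n)" unfolding CnL_def
    apply (rule okl_seq[where a=8], rule okl_KBL[OF kbok1], simp, rule lb, simp)
    apply (rule okl_seq[where a=16], rule okl_KBL[OF kboka], simp, rule lb, simp)
    apply (rule okl_seq[where a=24], rule okl_KBL[OF kbokz], simp, rule lb, simp)
    apply (rule okl_seq[where a=32], rule okl_KBL[OF kboka], simp, rule lb, simp)
    apply (rule okl_KBL[OF kbok1])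
    done
  thus ?thesis using depth_bound[OF _ ly] m by simp
qed


section \<open>Size\<close>

fun gw :: "gate \<Rightarrow> nat" where
  "gw (OneQ q U) = 1"
| "gw (CNOT a b) = 2"
| "gw (Fanout c ts) = Suc (length ts)"

lemma card_gq: "card (gate_qubits g) \<le> gw g"
proof (cases g)
  case (CNOT a b) then show ?thesis by (simp add: card_insert_if)
next
  case (Fanout c ts)
  have "card (insert c (set ts)) \<le> Suc (card (set ts))" by (simp add: card_insert_if)
  also have "\<dots> \<le> Suc (length ts)" by (simp add: card_length)
  finally show ?thesis using Fanout by simp
qed simp

lemma size_le: "circuit_size C \<le> sum_list (map gw C)"
  unfolding circuit_size_def by (induction C) (auto intro: add_mono card_gq)

lemma sum_split_pq: "(\<Sum>l<p+q. f l) = (\<Sum>l<p. f l) + (\<Sum>l<q. f (p + l))" for f :: "nat \<Rightarrow> nat"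
  by (induction q) auto

lemma sum_list_concat': "sum_list (concat xss) = sum_list (map sum_list xss)" for xss :: "nat list list"
  by (induction xss) auto

lemma gw_KB:
  assumes "1 \<le> p" "1 \<le> q"
  shows "sum_list (map gw (KB tg sr \<theta> off p q)) \<le> 17 * p * q"
proof -
  have h: "sum_list (map gw (hl (\<lambda>_. Hm) tg p)) = p"
    by (simp add: hl_def comp_def sum_list_triv)
  have "sum_list (map gw (fanl tg sr off p q)) = (\<Sum>l<p+q. Suc (length (ttf off p q l)))"
    by (simp add: fanl_def comp_def interv_sum_list_conv_sum_set_nat atLeast0LessThan)
  also have "\<dots> = (\<Sum>l<p. Suc q) + (\<Sum>l<q. Suc p)"
    unfolding sum_split_pq by (simp add: ttf_def)
  finally have f: "sum_list (map gw (fanl tg sr off p q)) = p * Suc q + q * Suc p" by simp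
  have c: "sum_list (map gw (cpsl \<theta> off p q)) = 7 * p * q"
    by (simp add: cpsl_def cpg_def map_concat sum_list_concat' comp_def sum_list_triv)
  have "sum_list (map gw (KB tg sr \<theta> off p q)) = 2 * p + 2 * (p * Suc q + q * Suc p) + 7 * p * q"
    by (simp add: KB_def h f c)
  also have "\<dots> = 4*p + 2*q + 11*(p*q)" by (simp add: algebra_simps)
  also have "\<dots> \<le> 17 * (p * q)"
  proof -
    have "p \<le> p * q" "q \<le> p * q" using assms by simp_all
    thus ?thesis by linarith
  qed
  also have "\<dots> = 17 * p * q" by simp
  finally show ?thesis .
qed

lemma size_Cn: "1 \<le> n \<Longrightarrow> circuit_size (Cn n) \<le> 17 * (2 * mm n * n + 2 * PP n * mm n + PP n)"
proof -
  assume n1: "1 \<le> n"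
  have m1: "1 \<le> mm n" and p1: "1 \<le> PP n" using mm_pos[OF n1] PP_pos[OF n1] by auto
  have "circuit_size (Cn n) \<le> sum_list (map gw (Cn n))" by (rule size_le)
  also have "\<dots> \<le> 17 * mm n * n + 17 * PP n * mm n + 17 * 1 * PP n + 17 * PP n * mm n + 17 * mm n * n"
  proof -
    note a = gw_KB[OF m1 n1, of "rr n" "\<lambda>j. j" th1 "off1 n"] gw_KB[OF p1 m1, of "apos n" "rr n" tha "off2 n"]
      gw_KB[OF order_refl p1, of "\<lambda>_. n" "apos n" "thz n" "off3 n"] gw_KB[OF m1 n1, of "rr n" "\<lambda>j. j" th1i "off1 n"]
    show ?thesis unfolding Cn_def KB1_def KB1i_def KBa_def KBz_def
      by (simp only: map_append sum_list_append) (use a in linarith)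
  qed
  finally show ?thesis by (simp add: algebra_simps)
qed


lemma size_nat_bound: "1 \<le> n \<Longrightarrow> circuit_size (Cn n) \<le> 136 * n * mm n"
proof -
  assume n1: "1 \<le> n"
  have m1: "1 \<le> mm n" using mm_pos[OF n1] .
  have "(2::nat) ^ mm n = 2 * 2 ^ (mm n - 1)" using m1 by (metis Suc_diff_1 less_le_trans zero_less_one power_Suc)
  hence P: "PP n \<le> 2 * n" using mm_le[OF n1] PP_Suc[of n] by linarith
  have "circuit_size (Cn n) \<le> 17 * (2 * mm n * n + 2 * PP n * mm n + PP n)" by (rule size_Cn[OF n1])
  also have "\<dots> \<le> 17 * (2 * mm n * n + 2 * (2 * n) * mm n + 2 * n * mm n)"
    using P m1 by (intro mult_left_mono add_mono mult_right_mono) (auto intro: order.trans[OF P] simp: mult_le_cancel1)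
  also have "\<dots> = 136 * n * mm n" by (simp add: algebra_simps)
  finally show ?thesis .
qed

lemma size_bound: "2 \<le> n \<Longrightarrow> real (circuit_size (Cn n)) \<le> 272 * (real n * log 2 (real n))"
proof -
  assume n2: "2 \<le> n"
  hence n1: "1 \<le> n" by simp
  have "real (2 ^ (mm n - 1)) \<le> real n" using mm_le[OF n1] by linarith
  hence "real (mm n - 1) \<le> log 2 (real n)" by (intro le_log_of_power) auto
  moreover have "1 \<le> log 2 (real n)" using n2 by (simp add: le_log_iff)
  moreover have "real (mm n - 1) = real (mm n) - 1" using mm_pos[OF n1] by simp
  ultimately have lm: "real (mm n) \<le> 2 * log 2 (real n)" by linarith
  have "real (circuit_size (Cn n)) \<le> 136 * real n * real (mm n)"
    using size_nat_bound[OF n1] by (metis of_nat_le_iff of_nat_mult of_nat_numeral)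
  also have "\<dots> \<le> 136 * real n * (2 * log 2 (real n))" using lm by (intro mult_left_mono) auto
  finally show ?thesis by (simp add: algebra_simps)
qed

theorem theorem1:
  shows "\<exists>(C :: nat \<Rightarrow> gate list) (a :: nat \<Rightarrow> nat) (d :: nat).
           (\<forall>n\<ge>1. wf_circuit (Suc n + a n) (C n) \<and> implements_OR n (a n) (C n)
                  \<and> circuit_depth (C n) \<le> d)
         \<and> (\<lambda>n. real (circuit_size (C n))) \<in> O(\<lambda>n. real n * log 2 (real n))"
proof (intro exI conjI allI impI)
  fix n :: nat assume n1: "n \<ge> 1"
  show "wf_circuit (Suc n + AA n) (Cn n)" using wf_Cn n1 by simp
  show "implements_OR n (AA n) (Cn n)" using Cn_implements n1 by simp
  show "circuit_depth (Cn n) \<le> 40" by (rule depth_Cn)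
next
  show "(\<lambda>n. real (circuit_size (Cn n))) \<in> O(\<lambda>n. real n * log 2 (real n))"
  proof (rule bigoI[where c=272])
    have "\<forall>n\<ge>2. norm (real (circuit_size (Cn n))) \<le> 272 * norm (real n * log 2 (real n))"
    proof (intro allI impI)
      fix n :: nat assume n2: "2 \<le> n"
      have "0 \<le> log 2 (real n)" using n2 by simp
      thus "norm (real (circuit_size (Cn n))) \<le> 272 * norm (real n * log 2 (real n))"
        using size_bound[OF n2] by simp
    qed
    thus "eventually (\<lambda>n. norm (real (circuit_size (Cn n))) \<le> 272 * norm (real n * log 2 (real n))) at_top"
      unfolding eventually_at_top_linorder by blast
  qed
qed


end
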